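(* There is an absolute constant $c>0$ such that, for all sufficiently large $n$ and every $1\le k\le n$, the half-lazy $k$-column transvection walk $Q_{n,k}$ on $\mathrm{St}(n,k)$ satisfies \[ \tau_{\mathrm{mix}}(Q_{n,k})\ge c\max\left(n\log n,\ \frac{nk}{\log(en)}\right). \]
   Context: Let $V=\mathbb F_2^k$ and $\mathrm{St}(n,k)=\{(z_1,\dots,z_n)\in V^n:\operatorname{span}(z_1,\dots,z_n)=V\}$. The $k$-column transvection kernel $P_{n,k}$ on $\mathrm{St}(n,k)$ is: choose an ordered pair $(a,b)$ of distinct indices in $\{1,\dots,n\}$ uniformly at random and replace $z_b$ by $z_b+z_a$, leaving other rows unchanged. The half-lazy kernel is $Q_{n,k}=\tfrac12(I+P_{n,k})$, with uniform stationary distribution $\pi$ on $\mathrm{St}(n,k)$. The mixing time is $\tau_{\mathrm{mix}}(Q)=\min\{t\ge0:\max_x\|Q^t(x,\cdot)-\pi\|_{\mathrm{TV}}\le1/4\}$. *)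

theory Defs
  imports Complex_Main
begin

text \<open>Vectors of V = F_2^k are represented as bool lists of length k
  (True = 1, False = 0); addition is coordinatewise XOR.
  A configuration (z_1,...,z_n) is a list of n such vectors (0-indexed).\<close>

definition vadd :: "bool list \<Rightarrow> bool list \<Rightarrow> bool list" where
  "vadd u v = map2 (\<noteq>) u v"

definition vsum :: "nat \<Rightarrow> bool list list \<Rightarrow> nat set \<Rightarrow> bool list" where
  "vsum k zs S = map (\<lambda>j. odd (card {i \<in> S. zs ! i ! j})) [0..<k]"

definition spans :: "nat \<Rightarrow> bool list list \<Rightarrow> bool" where
  "spans k zs \<longleftrightarrow> (\<forall>v. length v = k \<longrightarrow> (\<exists>S \<subseteq> {..<length zs}. vsum k zs S = v))"

definition St :: "nat \<Rightarrow> nat \<Rightarrow> bool list list set" where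
  "St n k = {zs. length zs = n \<and> (\<forall>z \<in> set zs. length z = k) \<and> spans k zs}"

definition Pker :: "nat \<Rightarrow> bool list list \<Rightarrow> bool list list \<Rightarrow> real" where
  "Pker n x y = real (card {(a, b). a < n \<and> b < n \<and> a \<noteq> b \<and> x[b := vadd (x ! b) (x ! a)] = y})
                / (real n * (real n - 1))"

definition Qker :: "nat \<Rightarrow> bool list list \<Rightarrow> bool list list \<Rightarrow> real" where
  "Qker n x y = (1/2) * ((if x = y then 1 else 0) + Pker n x y)"

fun Qpow :: "nat \<Rightarrow> nat \<Rightarrow> nat \<Rightarrow> bool list list \<Rightarrow> bool list list \<Rightarrow> real" where
  "Qpow n k 0 x y = (if x = y then 1 else 0)"
| "Qpow n k (Suc t) x y = (\<Sum>w \<in> St n k. Qpow n k t x w * Qker n w y)"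

definition tv_dist :: "nat \<Rightarrow> nat \<Rightarrow> nat \<Rightarrow> bool list list \<Rightarrow> real" where
  "tv_dist n k t x = (1/2) * (\<Sum>y \<in> St n k. \<bar>Qpow n k t x y - 1 / real (card (St n k))\<bar>)"

definition tau_mix :: "nat \<Rightarrow> nat \<Rightarrow> nat" where
  "tau_mix n k = (LEAST t. \<forall>x \<in> St n k. tv_dist n k t x \<le> 1/4)"

end

theory Submission
  imports Defs "HOL-Real_Asymp.Real_Asymp"
begin


lemma length_vadd[simp]: "length (vadd u v) = min (length u) (length v)"
  by (simp add: vadd_def)

lemma nth_vadd[simp]: "i < length u \<Longrightarrow> i < length v \<Longrightarrow> vadd u v ! i = (u ! i \<noteq> v ! i)"
  by (simp add: vadd_def)

lemma length_vsum[simp]: "length (vsum k zs S) = k"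
  by (simp add: vsum_def)

lemma nth_vsum[simp]: "j < k \<Longrightarrow> vsum k zs S ! j = odd (card {i \<in> S. zs ! i ! j})"
  by (simp add: vsum_def)

lemma vadd_comm: "vadd u v = vadd v u"
  by (rule nth_equalityI) auto

lemma vadd_assoc: "vadd (vadd u v) w = vadd u (vadd v w)"
  by (rule nth_equalityI) auto

lemma vadd_cancel: "length u = length v \<Longrightarrow> vadd (vadd u v) v = u"
  by (rule nth_equalityI) auto

lemma vadd_self: "vadd v v = replicate (length v) False"
  by (rule nth_equalityI) auto

lemma vadd_zero: "length u \<le> m \<Longrightarrow> vadd u (replicate m False) = u"
  by (rule nth_equalityI) auto

lemma card_symdiff_parity:
  assumes "finite A" "finite B"
  shows "odd (card ((A - B) \<union> (B - A))) = (odd (card A) \<noteq> odd (card B))"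
proof -
  have 1: "card ((A - B) \<union> (B - A)) = card (A - B) + card (B - A)"
    using assms by (intro card_Un_disjoint) auto
  have 2: "card A = card (A - B) + card (A \<inter> B)"
    using assms by (metis Int_commute card_Diff_subset_Int Diff_Diff_Int Int_lower1 card_Diff_subset finite_Int le_add_diff_inverse2 card_mono Diff_subset) 
  have 3: "card B = card (B - A) + card (A \<inter> B)"
    using assms by (metis Int_commute card_Diff_subset_Int Diff_Diff_Int Int_lower1 card_Diff_subset finite_Int le_add_diff_inverse2 card_mono Diff_subset)
  show ?thesis using 1 2 3 by auto
qed

lemma vsum_symdiff:
  assumes "finite S" "finite T"
  shows "vadd (vsum k zs S) (vsum k zs T) = vsum k zs ((S - T) \<union> (T - S))"
proof (rule nth_equalityI)
  fix j assume "j < length (vadd (vsum k zs S) (vsum k zs T))"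
  hence j: "j < k" by simp
  have e: "{i \<in> (S - T) \<union> (T - S). zs ! i ! j} = ({i\<in>S. zs!i!j} - {i\<in>T. zs!i!j}) \<union> ({i\<in>T. zs!i!j} - {i\<in>S. zs!i!j})"
    by auto
  have "odd (card {i \<in> (S - T) \<union> (T - S). zs ! i ! j}) = (odd (card {i\<in>S. zs!i!j}) \<noteq> odd (card {i\<in>T. zs!i!j}))"
    unfolding e using assms by (intro card_symdiff_parity) auto
  then show "vadd (vsum k zs S) (vsum k zs T) ! j = vsum k zs ((S - T) \<union> (T - S)) ! j"
    using j by simp
qed simp

lemma vsum_cong: "(\<And>i. i \<in> S \<Longrightarrow> zs ! i = ys ! i) \<Longrightarrow> vsum k zs S = vsum k ys S"
  unfolding vsum_def by (intro map_cong refl arg_cong[where f=odd] arg_cong[where f=card]) auto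

lemma vsum_empty: "vsum k zs {} = replicate k False"
  by (rule nth_equalityI) auto

lemma vsum_insert:
  assumes "finite S" "b \<notin> S" "length (zs ! b) = k"
  shows "vsum k zs (insert b S) = vadd (vsum k zs S) (zs ! b)"
proof (rule nth_equalityI)
  fix j assume "j < length (vsum k zs (insert b S))"
  hence j: "j < k" by simp
  have "{i \<in> insert b S. zs ! i ! j} = (if zs ! b ! j then insert b {i\<in>S. zs!i!j} else {i\<in>S. zs!i!j})"
    by auto
  thus "vsum k zs (insert b S) ! j = vadd (vsum k zs S) (zs ! b) ! j"
    using j assms by (simp add: card_insert_if)
qed (use assms in simp)



definition mvf :: "bool list list \<Rightarrow> nat \<Rightarrow> nat \<Rightarrow> bool list list" where
  "mvf zs a b = zs[b := vadd (zs ! b) (zs ! a)]"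

definition pairs :: "nat \<Rightarrow> (nat \<times> nat) set" where
  "pairs n = {(a, b). a < n \<and> b < n \<and> a \<noteq> b}"

lemma finite_pairs[simp]: "finite (pairs n)"
  unfolding pairs_def by (rule finite_subset[of _ "{..<n} \<times> {..<n}"]) auto

lemma card_pairs: "card (pairs n) = n * (n - 1)"
proof -
  have e: "pairs n = ({..<n} \<times> {..<n}) - (\<lambda>a. (a, a)) ` {..<n}"
    unfolding pairs_def by auto
  have "card ((\<lambda>a. (a, a)) ` {..<n}) = n"
    by (subst card_image) (auto simp: inj_on_def)
  then have "card (pairs n) = n * n - n"
    unfolding e by (subst card_Diff_subset) auto
  then show ?thesis by (simp add: diff_mult_distrib2)
qed

lemma St_D:
  assumes "zs \<in> St n k"
  shows "length zs = n" "\<And>i. i < n \<Longrightarrow> length (zs ! i) = k" "spans k zs"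
  using assms unfolding St_def by auto

lemma vsum_single: "length (zs ! a) = k \<Longrightarrow> vsum k zs {a} = zs ! a"
  using vsum_insert[of "{}" a zs k] by (simp add: vsum_empty vadd_comm vadd_zero)

lemma mvf_length[simp]: "length (mvf zs a b) = length zs"
  by (simp add: mvf_def)

lemma mvf_nth: "i < length zs \<Longrightarrow> mvf zs a b ! i = (if i = b then vadd (zs ! b) (zs ! a) else zs ! i)"
  by (simp add: mvf_def)

lemma vsum_mvf_notin:
  assumes "b \<notin> S"
  shows "vsum k (mvf zs a b) S = vsum k zs S"
  by (rule vsum_cong) (metis assms mvf_def nth_list_update_neq)

lemma vsum_mvf_in:
  assumes S: "S \<subseteq> {..<n}" "b \<in> S" and a: "a < n" "a \<noteq> b" and len: "length zs = n" "\<And>i. i < n \<Longrightarrow> length (zs ! i) = k"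
  shows "vsum k (mvf zs a b) S = vsum k zs ((S - {a}) \<union> ({a} - S))"
proof -
  have fS: "finite S" using S finite_subset by blast
  have bn: "b < n" using S by auto
  have "vsum k (mvf zs a b) S = vsum k (mvf zs a b) (insert b (S - {b}))"
    using S by (simp add: insert_absorb)
  also have "\<dots> = vadd (vsum k (mvf zs a b) (S - {b})) (mvf zs a b ! b)"
    using fS bn len a by (intro vsum_insert) (auto simp: mvf_nth)
  also have "\<dots> = vadd (vsum k zs (S - {b})) (vadd (zs ! b) (zs ! a))"
    using bn len by (simp add: vsum_mvf_notin mvf_nth)
  also have "\<dots> = vadd (vadd (vsum k zs (S - {b})) (zs ! b)) (zs ! a)"
    by (simp add: vadd_assoc)
  also have "vadd (vsum k zs (S - {b})) (zs ! b) = vsum k zs (insert b (S - {b}))"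
    using fS bn len by (intro vsum_insert[symmetric]) auto
  also have "insert b (S - {b}) = S" using S by auto
  also have "zs ! a = vsum k zs {a}" using a len by (simp add: vsum_single)
  also have "vadd (vsum k zs S) (vsum k zs {a}) = vsum k zs ((S - {a}) \<union> ({a} - S))"
    using fS by (simp add: vsum_symdiff)
  finally show ?thesis .
qed

lemma mvf_St:
  assumes x: "x \<in> St n k" and ab: "a < n" "b < n" "a \<noteq> b"
  shows "mvf x a b \<in> St n k"
proof -
  note xd = St_D[OF x]
  have len: "\<forall>z \<in> set (mvf x a b). length z = k"
  proof
    fix z assume "z \<in> set (mvf x a b)"
    then obtain i where i: "i < n" "z = mvf x a b ! i" using xd(1) by (auto simp: in_set_conv_nth)
    show "length z = k" using i xd ab by (auto simp: mvf_nth)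
  qed
  have sp: "spans k (mvf x a b)"
    unfolding spans_def
  proof (intro allI impI)
    fix v :: "bool list" assume "length v = k"
    then obtain S where S: "S \<subseteq> {..<n}" "vsum k x S = v"
      using xd(3) xd(1) unfolding spans_def by auto
    show "\<exists>S\<subseteq>{..<length (mvf x a b)}. vsum k (mvf x a b) S = v"
    proof (cases "b \<in> S")
      case False
      then show ?thesis using S xd(1) by (intro exI[of _ S]) (simp add: vsum_mvf_notin)
    next
      case True
      define T where "T = (S - {a}) \<union> ({a} - S)"
      have T: "T \<subseteq> {..<n}" "b \<in> T" using S ab True by (auto simp: T_def)
      have "(T - {a}) \<union> ({a} - T) = S" by (auto simp: T_def)
      then have "vsum k (mvf x a b) T = v"
        using vsum_mvf_in[OF T ab(1) ab(3) xd(1) xd(2)] S by simp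
      then show ?thesis using T xd(1) by (intro exI[of _ T]) simp
    qed
  qed
  show ?thesis using len sp xd(1) by (simp add: St_def)
qed

lemma mvf_invol:
  assumes x: "x \<in> St n k" and ab: "a < n" "b < n" "a \<noteq> b"
  shows "mvf (mvf x a b) a b = x"
proof -
  note xd = St_D[OF x]
  show ?thesis
    by (rule nth_equalityI) (use xd ab in \<open>auto simp: mvf_nth vadd_cancel\<close>)
qed

lemma Pker_set: "{(a, b). a < n \<and> b < n \<and> a \<noteq> b \<and> x[b := vadd (x ! b) (x ! a)] = y}
   = {p \<in> pairs n. mvf x (fst p) (snd p) = y}"
  by (auto simp: pairs_def mvf_def)

lemma Pker_alt: "Pker n x y = real (card {p \<in> pairs n. mvf x (fst p) (snd p) = y}) / (real n * (real n - 1))"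
  unfolding Pker_def Pker_set ..

lemma Pker_sym:
  assumes "x \<in> St n k" "y \<in> St n k"
  shows "Pker n x y = Pker n y x"
proof -
  have "{p \<in> pairs n. mvf x (fst p) (snd p) = y} = {p \<in> pairs n. mvf y (fst p) (snd p) = x}"
    using mvf_invol assms by (auto simp: pairs_def)
  then show ?thesis by (simp add: Pker_alt)
qed

lemma Qker_sym:
  assumes "x \<in> St n k" "y \<in> St n k"
  shows "Qker n x y = Qker n y x"
  using Pker_sym[OF assms] by (simp add: Qker_def)

lemma Pker_nonneg: "n \<ge> 1 \<Longrightarrow> Pker n x y \<ge> 0"
  by (simp add: Pker_def)

lemma Qker_nonneg: "n \<ge> 1 \<Longrightarrow> Qker n x y \<ge> 0"
  by (simp add: Qker_def Pker_nonneg)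

lemma finite_St[simp]: "finite (St n k)"
proof -
  have "St n k \<subseteq> {zs. set zs \<subseteq> {v. set v \<subseteq> UNIV \<and> length v = k} \<and> length zs = n}"
    by (auto simp: St_def)
  moreover have "finite {zs. set zs \<subseteq> {v. set v \<subseteq> (UNIV::bool set) \<and> length v = k} \<and> length zs = n}"
    by (intro finite_lists_length_eq finite_lists_length_eq) auto
  ultimately show ?thesis by (rule finite_subset)
qed

lemma Pker_sum:
  assumes x: "x \<in> St n k"
  shows "(\<Sum>y\<in>St n k. Pker n x y * h y) = (\<Sum>p\<in>pairs n. h (mvf x (fst p) (snd p))) / (real n * (real n - 1))"
proof -
  define f where "f p = mvf x (fst p) (snd p)" for p
  have fim: "f ` pairs n \<subseteq> St n k"
    using mvf_St[OF x] by (auto simp: f_def pairs_def)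
  have "(\<Sum>p\<in>pairs n. h (f p)) = (\<Sum>y\<in>f ` pairs n. (\<Sum>p\<in>{p\<in>pairs n. f p = y}. h (f p)))"
    by (rule sum.image_gen) simp
  also have "\<dots> = (\<Sum>y\<in>f ` pairs n. real (card {p\<in>pairs n. f p = y}) * h y)"
    by (intro sum.cong refl) simp
  also have "\<dots> = (\<Sum>y\<in>St n k. real (card {p\<in>pairs n. f p = y}) * h y)"
  proof (rule sum.mono_neutral_left[OF finite_St fim])
    show "\<forall>i\<in>St n k - f ` pairs n. real (card {p \<in> pairs n. f p = i}) * h i = 0"
      by auto
  qed
  finally have "(\<Sum>p\<in>pairs n. h (f p)) = (\<Sum>y\<in>St n k. real (card {p\<in>pairs n. f p = y}) * h y)" .
  then show ?thesis
    unfolding Pker_alt f_def[symmetric]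
    by (simp add: sum_divide_distrib[symmetric] field_simps)
qed

lemma Pker_rowsum:
  assumes x: "x \<in> St n k" and n: "n \<ge> 2"
  shows "(\<Sum>y\<in>St n k. Pker n x y) = 1"
proof -
  have "(\<Sum>y\<in>St n k. Pker n x y * 1) = real (card (pairs n)) / (real n * (real n - 1))"
    using Pker_sum[OF x, of "\<lambda>_. 1"] by simp
  also have "\<dots> = 1" using n by (simp add: card_pairs of_nat_diff)
  finally show ?thesis by simp
qed

lemma Qker_rowsum:
  assumes x: "x \<in> St n k" and n: "n \<ge> 2"
  shows "(\<Sum>y\<in>St n k. Qker n x y) = 1"
proof -
  have "(\<Sum>y\<in>St n k. Qker n x y) = (1/2) * (\<Sum>y\<in>St n k. (if x = y then 1 else 0) + Pker n x y)"
    unfolding Qker_def by (rule sum_distrib_left[symmetric])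
  also have "\<dots> = (1/2) * ((\<Sum>y\<in>St n k. (if x = y then 1 else 0)) + (\<Sum>y\<in>St n k. Pker n x y))"
    by (simp only: sum.distrib)
  also have "(\<Sum>y\<in>St n k. (if x = y then 1 else 0::real)) = 1"
    using x by (simp add: sum.delta)
  finally show ?thesis using Pker_rowsum[OF x n] by simp
qed

lemma Qker_colsum:
  assumes y: "y \<in> St n k" and n: "n \<ge> 2"
  shows "(\<Sum>x\<in>St n k. Qker n x y) = 1"
proof -
  have "(\<Sum>x\<in>St n k. Qker n x y) = (\<Sum>x\<in>St n k. Qker n y x)"
    by (rule sum.cong[OF refl], rule Qker_sym) (use y in auto)
  then show ?thesis using Qker_rowsum[OF y n] by simp
qed

lemma Qker_move:
  assumes x: "x \<in> St n k" and ab: "a < n" "b < n" "a \<noteq> b"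
  shows "Qker n x (mvf x a b) \<ge> 1 / (2 * (real n * (real n - 1)))"
proof -
  have n: "n \<ge> 2" using ab by auto
  have "(a, b) \<in> {p \<in> pairs n. mvf x (fst p) (snd p) = mvf x a b}"
    using ab by (simp add: pairs_def)
  then have "card {p \<in> pairs n. mvf x (fst p) (snd p) = mvf x a b} \<ge> 1"
    by (metis (no_types, lifting) One_nat_def Suc_leI card_gt_0_iff empty_iff finite_pairs finite_subset mem_Collect_eq subsetI)
  then have "Pker n x (mvf x a b) \<ge> 1 / (real n * (real n - 1))"
    unfolding Pker_alt using n by (intro divide_right_mono) auto
  moreover have "Qker n x (mvf x a b) \<ge> Pker n x (mvf x a b) / 2"
    unfolding Qker_def by simp
  ultimately have "(1 / (real n * (real n - 1))) / 2 \<le> Qker n x (mvf x a b)"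
    by (meson divide_right_mono order.trans zero_le_numeral)
  then show ?thesis by (simp add: mult.commute)
qed

lemma Qker_diag: "n \<ge> 1 \<Longrightarrow> Qker n x x \<ge> 1/2"
  by (simp add: Qker_def Pker_nonneg)



definition mv :: "nat \<Rightarrow> nat \<Rightarrow> bool list list \<Rightarrow> bool list list \<Rightarrow> bool" where
  "mv n k x y \<longleftrightarrow> x \<in> St n k \<and> (\<exists>a b. a < n \<and> b < n \<and> a \<noteq> b \<and> y = mvf x a b)"

definition unit :: "nat \<Rightarrow> nat \<Rightarrow> bool list" where
  "unit k i = map (\<lambda>j. j = i) [0..<k]"

definition canon :: "nat \<Rightarrow> nat \<Rightarrow> bool list list" where
  "canon n k = map (\<lambda>i. if i < k then unit k i else replicate k False) [0..<n]"

lemma mv_St: "mv n k x y \<Longrightarrow> y \<in> St n k"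
  unfolding mv_def using mvf_St by blast

lemma mv_sym: "mv n k x y \<Longrightarrow> mv n k y x"
  unfolding mv_def using mvf_St mvf_invol by metis

lemma rtc_St: "(mv n k)\<^sup>*\<^sup>* x y \<Longrightarrow> x \<in> St n k \<Longrightarrow> y \<in> St n k"
  by (induction rule: rtranclp_induct) (auto dest: mv_St)

lemma rtc_sym: "(mv n k)\<^sup>*\<^sup>* x y \<Longrightarrow> (mv n k)\<^sup>*\<^sup>* y x"
  by (induction rule: rtranclp_induct) (auto dest: mv_sym intro: converse_rtranclp_into_rtranclp)

lemma macro:
  assumes x: "x \<in> St n k" and b: "b < n" and T: "finite T" "T \<subseteq> {..<n}" "b \<notin> T"
  shows "(mv n k)\<^sup>*\<^sup>* x (x[b := vadd (x ! b) (vsum k x T)])"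
  using T
proof (induction T rule: finite_induct)
  case empty
  have "vadd (x ! b) (vsum k x {}) = x ! b"
    using St_D[OF x] b by (simp add: vsum_empty vadd_zero)
  then show ?case by simp
next
  case (insert a T)
  define x' where "x' = x[b := vadd (x ! b) (vsum k x T)]"
  have r: "(mv n k)\<^sup>*\<^sup>* x x'" using insert x'_def by auto
  have x'St: "x' \<in> St n k" using rtc_St[OF r x] .
  have a: "a < n" "a \<noteq> b" using insert by auto
  have "mv n k x' (mvf x' a b)" unfolding mv_def using x'St a b by auto
  moreover have "mvf x' a b = x[b := vadd (x ! b) (vsum k x (insert a T))]"
  proof -
    have "x' ! b = vadd (x ! b) (vsum k x T)" using b St_D[OF x] by (simp add: x'_def)
    moreover have "x' ! a = x ! a" using a by (simp add: x'_def)
    moreover have "vsum k x (insert a T) = vadd (vsum k x T) (x ! a)"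
      using insert a St_D[OF x] by (intro vsum_insert) auto
    ultimately show ?thesis by (simp add: mvf_def x'_def vadd_assoc)
  qed
  ultimately show ?case using r by (metis rtranclp.rtrancl_into_rtrancl)
qed

lemma length_unit[simp]: "length (unit k i) = k"
  by (simp add: unit_def)

lemma nth_unit[simp]: "j < k \<Longrightarrow> unit k i ! j = (j = i)"
  by (simp add: unit_def)

lemma vsum_units:
  assumes rows: "\<And>i. i < k \<Longrightarrow> y ! i = unit k i" and T: "T \<subseteq> {..<k}"
  shows "vsum k y T = map (\<lambda>j. j \<in> T) [0..<k]"
proof (rule nth_equalityI)
  fix j assume "j < length (vsum k y T)"
  hence j: "j < k" by simp
  have "{i \<in> T. y ! i ! j} = T \<inter> {j}"
    using T rows j by auto
  then show "vsum k y T ! j = map (\<lambda>j. j \<in> T) [0..<k] ! j"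
    using j by (auto simp: Int_insert_right)
qed simp

lemma phaseA:
  assumes x: "x \<in> St n k" and kn: "k \<le> n" and j: "j \<le> k"
  shows "\<exists>y. (mv n k)\<^sup>*\<^sup>* x y \<and> (\<forall>i<j. y ! i = unit k i)"
  using j
proof (induction j)
  case 0
  then show ?case by auto
next
  case (Suc j)
  then obtain y where r: "(mv n k)\<^sup>*\<^sup>* x y" and rows: "\<forall>i<j. y ! i = unit k i" by auto
  have yS: "y \<in> St n k" using rtc_St[OF r x] .
  note yd = St_D[OF yS]
  have jn: "j < n" "j < k" using Suc kn by auto
  obtain S where S: "S \<subseteq> {..<n}" "vsum k y S = unit k j"
    using yd(3) yd(1) unfolding spans_def by (metis length_unit)
  have fS: "finite S" using S(1) finite_subset by blast
  show ?case
  proof (cases "j \<in> S")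
    case True
    define T where "T = S - {j}"
    have T: "finite T" "T \<subseteq> {..<n}" "j \<notin> T" using fS S by (auto simp: T_def)
    have r2: "(mv n k)\<^sup>*\<^sup>* y (y[j := vadd (y ! j) (vsum k y T)])"
      by (rule macro[OF yS jn(1) T])
    have "vsum k y S = vsum k y (insert j T)" using True by (simp add: T_def insert_absorb)
    also have "\<dots> = vadd (vsum k y T) (y ! j)" using T yd jn by (intro vsum_insert) auto
    finally have "vadd (y ! j) (vsum k y T) = unit k j" using S by (simp add: vadd_comm)
    then show ?thesis using r r2 rows yd(1) jn
      by (intro exI[of _ "y[j := vadd (y ! j) (vsum k y T)]"]) (auto simp: nth_list_update less_Suc_eq)
  next
    case False
    have "\<exists>s\<in>S. j < s"
    proof (rule ccontr)
      assume "\<not> (\<exists>s\<in>S. j < s)"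
      then have Sj: "S \<subseteq> {..<j}" using False by (auto simp: not_less le_less)
      have "{i \<in> S. y ! i ! j} = {}" using Sj rows jn by auto
      then have "vsum k y S ! j = False" using jn by (simp only: nth_vsum) simp
      then show False using S jn by simp
    qed
    then obtain s where s: "s \<in> S" "j < s" by auto
    have sn: "s < n" using s S by auto
    define y1 where "y1 = mvf y j s"
    have m1: "mv n k y y1" unfolding mv_def y1_def using yS sn jn s by (intro conjI exI[of _ j] exI[of _ s]) auto
    have y1S: "y1 \<in> St n k" using mv_St[OF m1] .
    have "vsum k y1 S = vsum k y ((S - {j}) \<union> ({j} - S))"
      unfolding y1_def using vsum_mvf_in[OF S(1) s(1) jn(1) _ yd(1) yd(2)] s by auto
    also have "(S - {j}) \<union> ({j} - S) = insert j S" using False by auto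
    also have "vsum k y (insert j S) = vadd (unit k j) (y ! j)"
      using fS False yd jn S by (subst vsum_insert) auto
    finally have v1: "vsum k y1 S = vadd (unit k j) (y ! j)" .
    have y1j: "y1 ! j = y ! j" using s yd jn by (simp add: y1_def mvf_nth)
    have r2: "(mv n k)\<^sup>*\<^sup>* y1 (y1[j := vadd (y1 ! j) (vsum k y1 S)])"
      by (rule macro[OF y1S jn(1) fS S(1) False])
    have "vadd (y1 ! j) (vsum k y1 S) = unit k j"
      unfolding v1 y1j using yd jn
      by (metis length_unit vadd_assoc vadd_cancel vadd_comm)
    moreover have "\<forall>i<j. y1 ! i = unit k i" using rows s yd jn by (auto simp: y1_def mvf_nth)
    ultimately show ?thesis using r r2 m1 yd(1) jn
      by (intro exI[of _ "y1[j := vadd (y1 ! j) (vsum k y1 S)]"])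
         (auto simp: nth_list_update less_Suc_eq y1_def intro: rtranclp_trans)
  qed
qed

lemma phaseB:
  assumes y: "y \<in> St n k" and kn: "k \<le> n" and rows: "\<forall>i<k. y ! i = unit k i" and m: "k + m \<le> n"
  shows "\<exists>y'. (mv n k)\<^sup>*\<^sup>* y y' \<and> (\<forall>i<k. y' ! i = unit k i) \<and> (\<forall>i. k \<le> i \<and> i < k + m \<longrightarrow> y' ! i = replicate k False)"
  using m
proof (induction m)
  case 0
  then show ?case using rows by auto
next
  case (Suc m)
  then obtain y' where r: "(mv n k)\<^sup>*\<^sup>* y y'" and rows': "\<forall>i<k. y' ! i = unit k i"
    and z: "\<forall>i. k \<le> i \<and> i < k + m \<longrightarrow> y' ! i = replicate k False" by auto
  have y'S: "y' \<in> St n k" using rtc_St[OF r y] .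
  note yd = St_D[OF y'S]
  define b where "b = k + m"
  have b: "b < n" using Suc by (simp add: b_def)
  define T where "T = {i. i < k \<and> y' ! b ! i}"
  have T: "finite T" "T \<subseteq> {..<n}" "b \<notin> T" using kn by (auto simp: T_def b_def)
  have r2: "(mv n k)\<^sup>*\<^sup>* y' (y'[b := vadd (y' ! b) (vsum k y' T)])"
    by (rule macro[OF y'S b T])
  have "vsum k y' T = map (\<lambda>j. j \<in> T) [0..<k]"
    using rows' by (intro vsum_units) (auto simp: T_def)
  also have "\<dots> = y' ! b"
    using yd b by (intro nth_equalityI) (auto simp: T_def)
  finally have "vadd (y' ! b) (vsum k y' T) = replicate k False"
    using yd b by (simp add: vadd_self)
  then show ?case using r r2 rows' z b yd(1)
    by (intro exI[of _ "y'[b := vadd (y' ! b) (vsum k y' T)]"])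
       (auto simp: nth_list_update b_def less_Suc_eq intro: rtranclp_trans)
qed

lemma to_canon:
  assumes x: "x \<in> St n k" and kn: "k \<le> n"
  shows "(mv n k)\<^sup>*\<^sup>* x (canon n k)"
proof -
  obtain y where r: "(mv n k)\<^sup>*\<^sup>* x y" and rows: "\<forall>i<k. y ! i = unit k i"
    using phaseA[OF x kn order.refl] by auto
  have yS: "y \<in> St n k" using rtc_St[OF r x] .
  obtain y' where r2: "(mv n k)\<^sup>*\<^sup>* y y'" and rows': "\<forall>i<k. y' ! i = unit k i"
    and z: "\<forall>i. k \<le> i \<and> i < k + (n - k) \<longrightarrow> y' ! i = replicate k False"
    using phaseB[OF yS kn rows, of "n - k"] kn by auto
  have "y' \<in> St n k" using rtc_St[OF r2 yS] .
  then have "y' = canon n k"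
    using rows' z kn by (intro nth_equalityI) (auto simp: canon_def St_def)
  then show ?thesis using r r2 by (auto intro: rtranclp_trans)
qed

lemma connected:
  assumes "x \<in> St n k" "y \<in> St n k" "k \<le> n"
  shows "(mv n k)\<^sup>*\<^sup>* x y"
  using to_canon[OF assms(1,3)] rtc_sym[OF to_canon[OF assms(2,3)]] by (rule rtranclp_trans)



lemma canon_St:
  assumes "k \<le> n"
  shows "canon n k \<in> St n k"
proof -
  have len: "length (canon n k) = n" by (simp add: canon_def)
  have rows: "\<forall>z\<in>set (canon n k). length z = k" by (auto simp: canon_def)
  have u: "\<And>i. i < k \<Longrightarrow> canon n k ! i = unit k i" using assms by (simp add: canon_def)
  have "spans k (canon n k)"
    unfolding spans_def
  proof (intro allI impI)
    fix v :: "bool list" assume v: "length v = k"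
    define T where "T = {j. j < k \<and> v ! j}"
    have "vsum k (canon n k) T = map (\<lambda>j. j \<in> T) [0..<k]"
      by (rule vsum_units) (auto simp: u T_def)
    also have "\<dots> = v" using v by (intro nth_equalityI) (auto simp: T_def)
    finally show "\<exists>S\<subseteq>{..<length (canon n k)}. vsum k (canon n k) S = v"
      using assms len by (intro exI[of _ T]) (auto simp: T_def)
  qed
  then show ?thesis using len rows by (simp add: St_def)
qed

lemma Qpow_nonneg: "n \<ge> 1 \<Longrightarrow> Qpow n k t x y \<ge> 0"
  by (induction t arbitrary: y) (auto intro!: sum_nonneg mult_nonneg_nonneg Qker_nonneg)

lemma Qpow_rowsum:
  assumes x: "x \<in> St n k" and n: "n \<ge> 2"
  shows "(\<Sum>y\<in>St n k. Qpow n k t x y) = 1"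
proof (induction t)
  case 0
  then show ?case using x by (simp add: sum.delta)
next
  case (Suc t)
  have "(\<Sum>y\<in>St n k. Qpow n k (Suc t) x y) = (\<Sum>y\<in>St n k. \<Sum>w\<in>St n k. Qpow n k t x w * Qker n w y)"
    by simp
  also have "\<dots> = (\<Sum>w\<in>St n k. \<Sum>y\<in>St n k. Qpow n k t x w * Qker n w y)"
    by (rule sum.swap)
  also have "\<dots> = (\<Sum>w\<in>St n k. Qpow n k t x w)"
    by (intro sum.cong refl) (simp add: sum_distrib_left[symmetric] Qker_rowsum n)
  finally show ?case using Suc by simp
qed

lemma Qpow_colsum:
  assumes y: "y \<in> St n k" and n: "n \<ge> 2"
  shows "(\<Sum>x\<in>St n k. Qpow n k t x y) = 1"
  using y
proof (induction t arbitrary: y)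
  case 0
  then show ?case by (simp add: sum.delta')
next
  case (Suc t)
  have "(\<Sum>x\<in>St n k. Qpow n k (Suc t) x y) = (\<Sum>x\<in>St n k. \<Sum>w\<in>St n k. Qpow n k t x w * Qker n w y)"
    by simp
  also have "\<dots> = (\<Sum>w\<in>St n k. \<Sum>x\<in>St n k. Qpow n k t x w * Qker n w y)"
    by (rule sum.swap)
  also have "\<dots> = (\<Sum>w\<in>St n k. Qker n w y)"
    by (intro sum.cong refl) (simp add: sum_distrib_right[symmetric] Suc.IH)
  finally show ?case using Qker_colsum[OF Suc.prems n] by simp
qed

lemma Qpow_CK:
  assumes y: "y \<in> St n k"
  shows "Qpow n k (t + s) x y = (\<Sum>w\<in>St n k. Qpow n k t x w * Qpow n k s w y)"
  using y
proof (induction s arbitrary: y)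
  case 0
  then show ?case by (simp add: sum.delta' if_distrib cong: if_cong)
next
  case (Suc s)
  have "Qpow n k (t + Suc s) x y = (\<Sum>v\<in>St n k. Qpow n k (t + s) x v * Qker n v y)" by simp
  also have "\<dots> = (\<Sum>v\<in>St n k. \<Sum>w\<in>St n k. Qpow n k t x w * Qpow n k s w v * Qker n v y)"
    by (intro sum.cong refl) (simp add: Suc.IH sum_distrib_right)
  also have "\<dots> = (\<Sum>w\<in>St n k. Qpow n k t x w * (\<Sum>v\<in>St n k. Qpow n k s w v * Qker n v y))"
    by (subst sum.swap) (simp only: sum_distrib_left mult.assoc)
  finally show ?case by simp
qed

definition eps :: "nat \<Rightarrow> real" where
  "eps n = 1 / (2 * (real n * (real n - 1)))"

lemma eps_pos: "n \<ge> 2 \<Longrightarrow> eps n > 0"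
  by (simp add: eps_def)

lemma eps_le: "n \<ge> 2 \<Longrightarrow> eps n \<le> 1/2"
proof -
  assume n: "n \<ge> 2"
  then have "real n \<ge> 2" by simp
  then have "real n * (real n - 1) \<ge> 2 * 1" by (intro mult_mono) auto
  then show ?thesis by (simp add: eps_def field_simps)
qed

lemma Qpow_step_lower:
  assumes y: "y \<in> St n k" and n: "n \<ge> 2"
  shows "Qpow n k (Suc s) x y \<ge> Qpow n k s x y * eps n"
proof -
  have "Qpow n k s x y * eps n \<le> Qpow n k s x y * Qker n y y"
    using Qker_diag[of n y] eps_le[OF n] Qpow_nonneg[of n k s x y] n
    by (intro mult_left_mono) auto
  also have "\<dots> \<le> (\<Sum>w\<in>St n k. Qpow n k s x w * Qker n w y)"
    using y n by (intro member_le_sum) (auto intro!: mult_nonneg_nonneg Qpow_nonneg Qker_nonneg)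
  finally show ?thesis by simp
qed

lemma Qpow_path_lower:
  assumes "(mv n k ^^ j) x y" and x: "x \<in> St n k" and n: "n \<ge> 2"
  shows "Qpow n k j x y \<ge> eps n ^ j"
  using assms(1)
proof (induction j arbitrary: y)
  case 0
  then show ?case by simp
next
  case (Suc j)
  then obtain w where w: "(mv n k ^^ j) x w" "mv n k w y" by auto
  have wS: "w \<in> St n k" using rtc_St[OF relpowp_imp_rtranclp[OF w(1)] x] .
  obtain a b where ab: "a < n" "b < n" "a \<noteq> b" "y = mvf w a b" using w(2) unfolding mv_def by auto
  have "eps n ^ Suc j = eps n ^ j * eps n" by simp
  also have "\<dots> \<le> Qpow n k j x w * Qker n w y"
    using Suc.IH[OF w(1)] Qker_move[OF wS ab(1-3)] ab(4) eps_pos[OF n] Qpow_nonneg[of n k j x w] n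
    by (intro mult_mono) (auto simp: eps_def)
  also have "\<dots> \<le> (\<Sum>v\<in>St n k. Qpow n k j x v * Qker n v y)"
    using wS n by (intro member_le_sum) (auto intro!: mult_nonneg_nonneg Qpow_nonneg Qker_nonneg)
  finally show ?case by simp
qed

lemma Qpow_pad_lower:
  assumes y: "y \<in> St n k" and n: "n \<ge> 2" and h: "Qpow n k j x y \<ge> eps n ^ j"
  shows "Qpow n k (j + i) x y \<ge> eps n ^ (j + i)"
proof (induction i)
  case 0
  then show ?case using h by simp
next
  case (Suc i)
  have "eps n ^ (j + Suc i) = eps n ^ (j + i) * eps n" by simp
  also have "\<dots> \<le> Qpow n k (j + i) x y * eps n"
    using Suc eps_pos[OF n] by (intro mult_right_mono) auto
  also have "\<dots> \<le> Qpow n k (Suc (j + i)) x y" by (rule Qpow_step_lower[OF y n])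
  finally show ?case by simp
qed

lemma uniform_lower:
  assumes n: "n \<ge> 2" and kn: "k \<le> n"
  shows "\<exists>D. \<forall>x\<in>St n k. \<forall>y\<in>St n k. Qpow n k D x y \<ge> eps n ^ D"
proof -
  have "\<forall>p\<in>St n k \<times> St n k. \<exists>j. (mv n k ^^ j) (fst p) (snd p)"
    using connected kn by (auto simp: rtranclp_power)
  then obtain J where J: "\<And>p. p \<in> St n k \<times> St n k \<Longrightarrow> (mv n k ^^ J p) (fst p) (snd p)"
    by metis
  define D where "D = Max (J ` (St n k \<times> St n k))"
  have "\<forall>x\<in>St n k. \<forall>y\<in>St n k. Qpow n k D x y \<ge> eps n ^ D"
  proof (intro ballI)
    fix x y assume x: "x \<in> St n k" and y: "y \<in> St n k"
    have jD: "J (x, y) \<le> D" unfolding D_def using x y by (intro Max_ge) auto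
    have "Qpow n k (J (x,y)) x y \<ge> eps n ^ J (x,y)"
      using J[of "(x,y)"] x y by (intro Qpow_path_lower[OF _ x n]) auto
    from Qpow_pad_lower[OF y n this, of "D - J (x,y)"] show "Qpow n k D x y \<ge> eps n ^ D"
      using jD by simp
  qed
  then show ?thesis by blast
qed

definition Ldist :: "nat \<Rightarrow> nat \<Rightarrow> nat \<Rightarrow> bool list list \<Rightarrow> real" where
  "Ldist n k t x = (\<Sum>y\<in>St n k. \<bar>Qpow n k t x y - 1 / real (card (St n k))\<bar>)"

lemma contraction:
  assumes n: "n \<ge> 2" and x: "x \<in> St n k"
    and low: "\<forall>w\<in>St n k. \<forall>y\<in>St n k. Qpow n k D w y \<ge> \<delta>"
  shows "Ldist n k (t + D) x \<le> (1 - real (card (St n k)) * \<delta>) * Ldist n k t x"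
proof -
  define N where "N = real (card (St n k))"
  have Npos: "N > 0" using x by (auto simp: N_def card_gt_0_iff)
  define f where "f w = Qpow n k t x w - 1 / N" for w
  have sf: "(\<Sum>w\<in>St n k. f w) = 0"
    using Qpow_rowsum[OF x n, of t] Npos x by (auto simp: f_def sum_subtractf N_def)
  have key: "Qpow n k (t + D) x y - 1/N = (\<Sum>w\<in>St n k. f w * (Qpow n k D w y - \<delta>))"
    if y: "y \<in> St n k" for y
  proof -
    have "(\<Sum>w\<in>St n k. f w * (Qpow n k D w y - \<delta>))
        = (\<Sum>w\<in>St n k. Qpow n k t x w * Qpow n k D w y) - (1/N) * (\<Sum>w\<in>St n k. Qpow n k D w y)
          - \<delta> * (\<Sum>w\<in>St n k. f w)"
    proof -
      have "\<And>w. f w * (Qpow n k D w y - \<delta>) = Qpow n k t x w * Qpow n k D w y - (1/N) * Qpow n k D w y - \<delta> * f w"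
        by (simp add: f_def algebra_simps)
      then show ?thesis by (simp add: sum_subtractf sum_distrib_left)
    qed
    also have "\<dots> = Qpow n k (t + D) x y - 1/N"
      using Qpow_CK[OF y, of t D x] Qpow_colsum[OF y n, of D] sf by simp
    finally show ?thesis by simp
  qed
  have "Ldist n k (t + D) x = (\<Sum>y\<in>St n k. \<bar>\<Sum>w\<in>St n k. f w * (Qpow n k D w y - \<delta>)\<bar>)"
    unfolding Ldist_def N_def[symmetric] by (intro sum.cong refl) (simp add: key)
  also have "\<dots> \<le> (\<Sum>y\<in>St n k. \<Sum>w\<in>St n k. \<bar>f w\<bar> * (Qpow n k D w y - \<delta>))"
  proof (intro sum_mono)
    fix y assume y: "y \<in> St n k"
    have "\<bar>\<Sum>w\<in>St n k. f w * (Qpow n k D w y - \<delta>)\<bar> \<le> (\<Sum>w\<in>St n k. \<bar>f w * (Qpow n k D w y - \<delta>)\<bar>)"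
      by (rule sum_abs)
    also have "\<dots> = (\<Sum>w\<in>St n k. \<bar>f w\<bar> * (Qpow n k D w y - \<delta>))"
      using low y by (intro sum.cong refl) (simp add: abs_mult)
    finally show "\<bar>\<Sum>w\<in>St n k. f w * (Qpow n k D w y - \<delta>)\<bar> \<le> (\<Sum>w\<in>St n k. \<bar>f w\<bar> * (Qpow n k D w y - \<delta>))" .
  qed
  also have "\<dots> = (\<Sum>w\<in>St n k. \<bar>f w\<bar> * (\<Sum>y\<in>St n k. (Qpow n k D w y - \<delta>)))"
    by (subst sum.swap) (simp add: sum_distrib_left)
  also have "\<dots> = (\<Sum>w\<in>St n k. \<bar>f w\<bar> * (1 - N * \<delta>))"
    by (intro sum.cong refl) (simp add: sum_subtractf Qpow_rowsum n N_def)
  also have "\<dots> = (1 - N * \<delta>) * Ldist n k t x"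
    by (simp add: Ldist_def f_def N_def sum_distrib_left mult.commute)
  finally show ?thesis by (simp add: N_def)
qed

lemma Ldist0: "x \<in> St n k \<Longrightarrow> Ldist n k 0 x \<le> 2"
proof -
  assume x: "x \<in> St n k"
  define N where "N = real (card (St n k))"
  have Npos: "N > 0" using x by (auto simp: N_def card_gt_0_iff)
  have "Ldist n k 0 x \<le> (\<Sum>y\<in>St n k. (if x = y then 1 else 0) + 1/N)"
    unfolding Ldist_def N_def[symmetric] using Npos by (intro sum_mono) (auto simp: abs_if)
  also have "\<dots> = 2" using x Npos by (simp add: sum.distrib N_def sum.delta) blast
  finally show ?thesis .
qed

lemma mixing_exists:
  assumes n: "n \<ge> 2" and kn: "k \<le> n"
  shows "\<exists>t. \<forall>x\<in>St n k. tv_dist n k t x \<le> 1/4"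
proof -
  obtain D where D: "\<forall>x\<in>St n k. \<forall>y\<in>St n k. Qpow n k D x y \<ge> eps n ^ D"
    using uniform_lower[OF n kn] by blast
  define \<delta> where "\<delta> = eps n ^ D"
  define N where "N = real (card (St n k))"
  have cS: "canon n k \<in> St n k" using canon_St[OF kn] .
  have Npos: "N > 0" using cS by (auto simp: N_def card_gt_0_iff)
  have dpos: "\<delta> > 0" using eps_pos[OF n] by (simp add: \<delta>_def)
  have "N * \<delta> = (\<Sum>y\<in>St n k. \<delta>)" by (simp add: N_def)
  also have "\<dots> \<le> (\<Sum>y\<in>St n k. Qpow n k D (canon n k) y)"
    using D cS by (intro sum_mono) (auto simp: \<delta>_def)
  also have "\<dots> = 1" using Qpow_rowsum[OF cS n] .
  finally have r0: "0 \<le> 1 - N * \<delta>" by simp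
  have r1: "1 - N * \<delta> < 1" using Npos dpos by simp
  obtain m where m: "(1 - N * \<delta>) ^ m < 1/4"
    using r1 real_arch_pow_inv[of "1/4" "1 - N * \<delta>"] by auto
  have L: "Ldist n k (i * D) x \<le> (1 - N * \<delta>) ^ i * 2" if x: "x \<in> St n k" for i x
  proof (induction i)
    case 0
    then show ?case using Ldist0[OF x] by simp
  next
    case (Suc i)
    have "Ldist n k (Suc i * D) x = Ldist n k (i * D + D) x" by (simp add: add.commute)
    also have "\<dots> \<le> (1 - N * \<delta>) * Ldist n k (i * D) x"
      unfolding N_def using contraction[OF n x] D \<delta>_def by blast
    also have "\<dots> \<le> (1 - N * \<delta>) * ((1 - N * \<delta>) ^ i * 2)"
      using Suc r0 by (intro mult_left_mono) auto
    finally show ?case by (simp add: mult.assoc)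
  qed
  have "\<forall>x\<in>St n k. tv_dist n k (m * D) x \<le> 1/4"
  proof
    fix x assume x: "x \<in> St n k"
    have "tv_dist n k (m * D) x = Ldist n k (m * D) x / 2" by (simp add: tv_dist_def Ldist_def)
    also have "\<dots> \<le> (1 - N * \<delta>) ^ m * 2 / 2" using L[OF x, of m] by (intro divide_right_mono) auto
    also have "\<dots> \<le> 1/4" using m by simp
    finally show "tv_dist n k (m * D) x \<le> 1/4" .
  qed
  then show ?thesis by blast
qed



fun Rset :: "nat \<Rightarrow> bool list list \<Rightarrow> nat \<Rightarrow> bool list list set" where
  "Rset n x 0 = {x}"
| "Rset n x (Suc t) = Rset n x t \<union> (\<Union>w\<in>Rset n x t. (\<lambda>p. mvf w (fst p) (snd p)) ` ({..<n} \<times> {..<n}))"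

lemma Rset_finite: "finite (Rset n x t)"
  by (induction t) auto

lemma Rset_card: "card (Rset n x t) \<le> (n^2 + 1) ^ t"
proof (induction t)
  case 0
  then show ?case by simp
next
  case (Suc t)
  have "card (Rset n x (Suc t)) \<le> card (Rset n x t) + card (\<Union>w\<in>Rset n x t. (\<lambda>p. mvf w (fst p) (snd p)) ` ({..<n} \<times> {..<n}))"
    by (simp add: card_Un_le)
  also have "card (\<Union>w\<in>Rset n x t. (\<lambda>p. mvf w (fst p) (snd p)) ` ({..<n} \<times> {..<n})) \<le> (\<Sum>w\<in>Rset n x t. card ((\<lambda>p. mvf w (fst p) (snd p)) ` ({..<n} \<times> {..<n})))"
    by (rule card_UN_le) (rule Rset_finite)
  also have "\<dots> \<le> (\<Sum>w\<in>Rset n x t. n^2)"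
    by (intro sum_mono order.trans[OF card_image_le]) (auto simp: power2_eq_square)
  also have "\<dots> = card (Rset n x t) * n^2" by simp
  finally have "card (Rset n x (Suc t)) \<le> card (Rset n x t) * (n^2 + 1)" by simp
  also have "\<dots> \<le> (n^2+1)^t * (n^2+1)" using Suc by (intro mult_right_mono) auto
  finally show ?case by (simp add: mult.commute)
qed

lemma Qpow_support:
  assumes n: "n \<ge> 1" and nz: "Qpow n k t x y \<noteq> 0"
  shows "y \<in> Rset n x t"
  using nz
proof (induction t arbitrary: y)
  case 0
  then show ?case by (auto split: if_splits)
next
  case (Suc t)
  from Suc.prems obtain w where w: "w \<in> St n k" "Qpow n k t x w * Qker n w y \<noteq> 0"
    by (auto elim: sum.not_neutral_contains_not_neutral)
  have wR: "w \<in> Rset n x t" using w(2) Suc.IH by auto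
  have q: "Qker n w y \<noteq> 0" using w(2) by auto
  show ?case
  proof (cases "w = y")
    case True
    then show ?thesis using wR by simp
  next
    case False
    then have "Pker n w y \<noteq> 0" using q by (simp add: Qker_def)
    then have "card {p \<in> pairs n. mvf w (fst p) (snd p) = y} \<noteq> 0" by (simp add: Pker_alt)
    then obtain p where "p \<in> pairs n" "mvf w (fst p) (snd p) = y"
      by (metis (mono_tags, lifting) Collect_empty_eq card.empty)
    then have "y \<in> (\<lambda>p. mvf w (fst p) (snd p)) ` ({..<n} \<times> {..<n})"
      by (force simp: pairs_def)
    then show ?thesis using wR by auto
  qed
qed

lemma gen_half: "(a::real) \<le> S \<Longrightarrow> T = 1/2*S \<Longrightarrow> a/2 \<le> T" by simp

lemma tv_lower_reach:
  assumes n: "n \<ge> 1" and x: "x \<in> St n k"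
  shows "tv_dist n k t x \<ge> (1 - real (card (Rset n x t)) / real (card (St n k))) / 2"
proof -
  define N where "N = real (card (St n k))"
  have Npos: "N > 0" using x by (auto simp: N_def card_gt_0_iff)
  have "(\<Sum>y\<in>St n k - Rset n x t. 1 / N) \<le> (\<Sum>y\<in>St n k - Rset n x t. \<bar>Qpow n k t x y - 1 / N\<bar>)"
  proof (intro sum_mono)
    fix y assume "y \<in> St n k - Rset n x t"
    then have "Qpow n k t x y = 0" using Qpow_support[OF n, of k t x y] by blast
    then show "1 / N \<le> \<bar>Qpow n k t x y - 1 / N\<bar>" using Npos by simp
  qed
  also have "\<dots> \<le> (\<Sum>y\<in>St n k. \<bar>Qpow n k t x y - 1 / N\<bar>)"
    by (intro sum_mono2) auto
  finally have 1: "real (card (St n k - Rset n x t)) / N \<le> (\<Sum>y\<in>St n k. \<bar>Qpow n k t x y - 1 / N\<bar>)"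
    by simp
  have "card (St n k) \<le> card (St n k - Rset n x t) + card (Rset n x t)"
  proof -
    have "card (St n k) \<le> card ((St n k - Rset n x t) \<union> Rset n x t)"
      by (intro card_mono) (auto simp: Rset_finite)
    also have "\<dots> \<le> card (St n k - Rset n x t) + card (Rset n x t)" by (rule card_Un_le)
    finally show ?thesis .
  qed
  then have "N - real (card (Rset n x t)) \<le> real (card (St n k - Rset n x t))"
    unfolding N_def by linarith
  then have "(N - real (card (Rset n x t))) / N \<le> real (card (St n k - Rset n x t)) / N"
    using Npos by (intro divide_right_mono) auto
  also have "(N - real (card (Rset n x t))) / N = 1 - real (card (Rset n x t)) / N"
    using Npos by (simp add: field_simps)
  finally have "1 - real (card (Rset n x t)) / N \<le> (\<Sum>y\<in>St n k. \<bar>Qpow n k t x y - 1 / N\<bar>)"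
    using 1 by linarith
  moreover have "tv_dist n k t x = (1/2) * (\<Sum>y\<in>St n k. \<bar>Qpow n k t x y - 1 / N\<bar>)"
    by (simp add: tv_dist_def N_def)
  ultimately have "tv_dist n k t x \<ge> (1 - real (card (Rset n x t)) / N) / 2"
    by (rule gen_half)
  then show ?thesis by (simp add: N_def)
qed



definition inSp :: "nat \<Rightarrow> bool list list \<Rightarrow> bool list \<Rightarrow> bool" where
  "inSp k zs v \<longleftrightarrow> (\<exists>S\<subseteq>{..<length zs}. vsum k zs S = v)"

lemma inSp_vadd: "inSp k zs v1 \<Longrightarrow> inSp k zs v2 \<Longrightarrow> inSp k zs (vadd v1 v2)"
proof -
  assume "inSp k zs v1" "inSp k zs v2"
  then obtain S1 S2 where S: "S1 \<subseteq> {..<length zs}" "vsum k zs S1 = v1" "S2 \<subseteq> {..<length zs}" "vsum k zs S2 = v2"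
    unfolding inSp_def by blast
  have "finite S1" "finite S2" using S finite_subset by blast+
  then have "vadd v1 v2 = vsum k zs ((S1 - S2) \<union> (S2 - S1))" using S vsum_symdiff by metis
  then show ?thesis unfolding inSp_def using S by (intro exI[of _ "(S1 - S2) \<union> (S2 - S1)"]) auto
qed

lemma inSp_row: "i < length zs \<Longrightarrow> length (zs ! i) = k \<Longrightarrow> inSp k zs (zs ! i)"
  unfolding inSp_def by (intro exI[of _ "{i}"]) (auto simp: vsum_single)

lemma inSp_zero: "inSp k zs (replicate k False)"
  unfolding inSp_def by (intro exI[of _ "{}"]) (auto simp: vsum_empty)

lemma inSp_ind:
  assumes J: "\<forall>j\<in>J. inSp k zs (unit k j)" and T: "finite T" "T \<subseteq> J"
  shows "inSp k zs (map (\<lambda>j. j \<in> T) [0..<k])"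
  using T
proof (induction T rule: finite_induct)
  case empty
  have "map (\<lambda>j. j \<in> {}) [0..<k] = replicate k False" by (intro nth_equalityI) auto
  then show ?case using inSp_zero by simp
next
  case (insert j T)
  have "map (\<lambda>l. l \<in> insert j T) [0..<k] = vadd (unit k j) (map (\<lambda>l. l \<in> T) [0..<k])"
    using insert by (intro nth_equalityI) auto
  then show ?case using insert J by (simp add: inSp_vadd)
qed

lemma spans_of_units:
  assumes "\<forall>j<k. inSp k zs (unit k j)"
  shows "spans k zs"
  unfolding spans_def
proof (intro allI impI)
  fix v :: "bool list" assume v: "length v = k"
  have "inSp k zs (map (\<lambda>j. j \<in> {j. j < k \<and> v ! j}) [0..<k])"
    using assms by (intro inSp_ind[of "{..<k}"]) auto
  moreover have "map (\<lambda>j. j \<in> {j. j < k \<and> v ! j}) [0..<k] = v"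
    using v by (intro nth_equalityI) auto
  ultimately show "\<exists>S\<subseteq>{..<length zs}. vsum k zs S = v" unfolding inSp_def by simp
qed

definition bld :: "nat \<Rightarrow> nat \<Rightarrow> bool list list \<Rightarrow> bool list list \<Rightarrow> bool list list" where
  "bld m k us ws = map (\<lambda>i. map (\<lambda>j. j = i) [0..<m] @ us ! i) [0..<m] @ map (unit k) [m..<k] @ ws"

definition BL :: "nat \<Rightarrow> bool list set" where
  "BL L = {u. length u = L}"

lemma card_BL: "card (BL L) = 2 ^ L"
proof -
  show ?thesis using card_lists_length_eq[of "UNIV::bool set" L] by (simp add: BL_def)
qed

lemma finite_BL: "finite (BL L)"
  using card_BL[of L] card.infinite by fastforce

definition Dom :: "nat \<Rightarrow> nat \<Rightarrow> nat \<Rightarrow> (bool list list \<times> bool list list) set" where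
  "Dom n m k = {us. set us \<subseteq> BL (k - m) \<and> length us = m} \<times> {ws. set ws \<subseteq> BL k \<and> length ws = n - k}"

lemma card_Dom: "card (Dom n m k) = (2 ^ (k - m)) ^ m * (2 ^ k) ^ (n - k)"
  unfolding Dom_def by (simp add: card_cartesian_product card_lists_length_eq finite_BL card_BL)

lemma bld_nth:
  assumes "m \<le> k" "length us = m"
  shows "i < m \<Longrightarrow> bld m k us ws ! i = map (\<lambda>j. j = i) [0..<m] @ us ! i"
    and "m \<le> i \<Longrightarrow> i < k \<Longrightarrow> bld m k us ws ! i = unit k i"
    and "k \<le> i \<Longrightarrow> bld m k us ws ! i = ws ! (i - k)"
  using assms by (auto simp: bld_def nth_append)

lemma bld_length: "m \<le> k \<Longrightarrow> length (bld m k us ws) = m + (k - m) + length ws"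
  by (simp add: bld_def)

lemma bld_St:
  assumes mk: "m \<le> k" and kn: "k \<le> n" and d: "(us, ws) \<in> Dom n m k"
  shows "bld m k us ws \<in> St n k"
proof -
  have us0: "length us = m" "\<forall>u\<in>set us. length u = k - m" and ws0: "length ws = n - k" "\<forall>u\<in>set ws. length u = k"
    using d by (auto simp: Dom_def BL_def)
  have us: "length us = m" "\<And>i. i < m \<Longrightarrow> length (us ! i) = k - m"
    using us0 by (auto dest: nth_mem)
  have ws: "length ws = n - k" "\<And>i. i < n - k \<Longrightarrow> length (ws ! i) = k"
    using ws0 by (auto dest: nth_mem)
  define zs where "zs = bld m k us ws"
  have len: "length zs = n" using bld_length[OF mk] ws kn mk by (simp add: zs_def)
  have rowlen: "length (zs ! i) = k" if "i < n" for i
  proof -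
    consider "i < m" | "m \<le> i" "i < k" | "k \<le> i" by linarith
    then show ?thesis
    proof cases
      case 1 then show ?thesis using bld_nth(1)[OF mk us(1)] us mk by (simp add: zs_def)
    next
      case 2 then show ?thesis using bld_nth(2)[OF mk us(1)] by (simp add: zs_def)
    next
      case 3 then show ?thesis using bld_nth(3)[OF mk us(1)] ws that by (simp add: zs_def)
    qed
  qed
  have up: "inSp k zs (unit k j)" if "m \<le> j" "j < k" for j
    using inSp_row[of j zs k] bld_nth(2)[OF mk us(1) that] that kn len by (simp add: zs_def)
  have low: "inSp k zs (unit k j)" if j: "j < m" for j
  proof -
    define T where "T = {l. m \<le> l \<and> l < k \<and> us ! j ! (l - m)}"
    have w: "inSp k zs (map (\<lambda>l. l \<in> T) [0..<k])"
      using up by (intro inSp_ind[of "{m..<k}"]) (auto simp: T_def)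
    have r: "inSp k zs (zs ! j)" using inSp_row[of j zs k] rowlen[of j] j mk kn len by simp
    have "vadd (zs ! j) (map (\<lambda>l. l \<in> T) [0..<k]) = unit k j"
    proof (rule nth_equalityI)
      show "length (vadd (zs ! j) (map (\<lambda>l. l \<in> T) [0..<k])) = length (unit k j)"
        using rowlen[of j] j mk kn by simp
    next
      fix l assume "l < length (vadd (zs ! j) (map (\<lambda>l. l \<in> T) [0..<k]))"
      then have l: "l < k" using rowlen[of j] j mk kn by simp
      have zj: "zs ! j = map (\<lambda>i. i = j) [0..<m] @ us ! j" using bld_nth(1)[OF mk us(1) j] by (simp add: zs_def)
      show "vadd (zs ! j) (map (\<lambda>l. l \<in> T) [0..<k]) ! l = unit k j ! l"
        using l j rowlen[of j] mk kn unfolding zj by (cases "l < m") (auto simp: nth_append T_def)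
    qed
    then show ?thesis using inSp_vadd[OF r w] by simp
  qed
  have "spans k zs"
    by (rule spans_of_units) (metis up low not_less)
  then show ?thesis using len rowlen by (auto simp: St_def zs_def in_set_conv_nth)
qed

lemma bld_inj:
  assumes mk: "m \<le> k"
  shows "inj_on (\<lambda>p. bld m k (fst p) (snd p)) (Dom n m k)"
proof (rule inj_onI)
  fix p q assume p: "p \<in> Dom n m k" and q: "q \<in> Dom n m k"
    and e: "bld m k (fst p) (snd p) = bld m k (fst q) (snd q)"
  obtain us ws us' ws' where pq: "p = (us, ws)" "q = (us', ws')" by fastforce
  have l: "length us = m" "length us' = m" using p q pq by (auto simp: Dom_def)
  have "us = us'"
  proof (rule nth_equalityI)
    show "length us = length us'" using l by simp
  next
    fix i assume i: "i < length us"
    have "bld m k us ws ! i = bld m k us' ws' ! i" using e pq by simp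
    then have "map (\<lambda>j. j = i) [0..<m] @ us ! i = map (\<lambda>j. j = i) [0..<m] @ us' ! i"
      using bld_nth(1)[OF mk l(1)] bld_nth(1)[OF mk l(2)] i l by simp
    then show "us ! i = us' ! i" by simp
  qed
  moreover have "ws = ws'"
  proof -
    have "drop k (bld m k us ws) = ws" using mk l by (simp add: bld_def)
    moreover have "drop k (bld m k us' ws') = ws'" using mk l by (simp add: bld_def)
    ultimately show ?thesis using e pq by simp
  qed
  ultimately show "p = q" using pq by simp
qed

lemma card_St_lower:
  assumes kn: "k \<le> n"
  shows "2 ^ ((k - k div 2) * (k div 2) + k * (n - k)) \<le> card (St n k)"
proof -
  define m where "m = k div 2"
  have mk: "m \<le> k" by (simp add: m_def)
  have "card (Dom n m k) = card ((\<lambda>p. bld m k (fst p) (snd p)) ` Dom n m k)"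
    using bld_inj[OF mk] by (simp add: card_image)
  also have "\<dots> \<le> card (St n k)"
    using bld_St[OF mk kn] by (intro card_mono) auto
  finally show ?thesis unfolding card_Dom m_def by (simp add: power_mult[symmetric] power_add)
qed



definition nz :: "nat \<Rightarrow> nat \<Rightarrow> bool list list \<Rightarrow> nat" where
  "nz n k y = card {i. i < n \<and> y ! i \<noteq> replicate k False}"

lemma sum_ind_mult: "finite A \<Longrightarrow> w \<in> A \<Longrightarrow> (\<Sum>y\<in>A. (if w = y then 1 else 0) * (f y::real)) = f w"
proof -
  assume A: "finite A" "w \<in> A"
  have "(\<Sum>y\<in>A. (if w = y then 1 else 0) * f y) = (\<Sum>y\<in>A. if w = y then f w else 0)"
    by (intro sum.cong) auto
  then show ?thesis using A by simp
qed

lemma half_mono: "(a::real) = 1/2*b + 1/2*c \<Longrightarrow> c \<le> d \<Longrightarrow> a \<le> 1/2*b + 1/2*d" by simp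

lemma nz_le: "nz n k y \<le> n"
  unfolding nz_def by (rule order.trans[OF card_mono[of "{..<n}"]]) auto

lemma nz_mvf:
  assumes w: "w \<in> St n k" and ab: "a < n" "b < n" "a \<noteq> b"
  shows "real (nz n k (mvf w a b)) \<le> real (nz n k w) + (if w ! a \<noteq> replicate k False then 1 else 0)"
proof (cases "w ! a = replicate k False")
  case True
  note wd = St_D[OF w]
  have "mvf w a b = w"
    using True wd ab by (intro nth_equalityI) (auto simp: mvf_nth vadd_zero)
  then show ?thesis using True by simp
next
  case False
  note wd = St_D[OF w]
  have "{i. i < n \<and> mvf w a b ! i \<noteq> replicate k False} \<subseteq> insert b {i. i < n \<and> w ! i \<noteq> replicate k False}"
    using wd by (auto simp: mvf_nth)
  then have "nz n k (mvf w a b) \<le> card (insert b {i. i < n \<and> w ! i \<noteq> replicate k False})"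
    unfolding nz_def by (intro card_mono) auto
  also have "\<dots> \<le> nz n k w + 1" unfolding nz_def by (simp add: card_insert_if)
  finally show ?thesis using False by simp
qed

lemma pairs_Sigma: "pairs n = Sigma {..<n} (\<lambda>a. {..<n} - {a})"
  by (auto simp: pairs_def)

lemma sum_pairs_ind:
  "(\<Sum>p\<in>pairs n. (if w ! fst p \<noteq> replicate k False then 1 else 0 :: real)) = real (n - 1) * real (nz n k w)"
proof -
  have "(\<Sum>p\<in>pairs n. (if w ! fst p \<noteq> replicate k False then 1 else 0 :: real))
      = (\<Sum>a<n. \<Sum>b\<in>{..<n} - {a}. (if w ! a \<noteq> replicate k False then 1 else 0 :: real))"
    unfolding pairs_Sigma by (subst sum.Sigma) (auto simp: case_prod_beta)
  also have "\<dots> = (\<Sum>a<n. real (n - 1) * (if w ! a \<noteq> replicate k False then 1 else 0))"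
    by (intro sum.cong refl) simp
  also have "\<dots> = real (n - 1) * (\<Sum>a<n. (if w ! a \<noteq> replicate k False then 1 else 0))"
    by (simp add: sum_distrib_left)
  also have "(\<Sum>a<n. (if w ! a \<noteq> replicate k False then 1 else 0 :: real)) = real (nz n k w)"
    unfolding nz_def by (simp add: sum.If_cases Int_def conj_commute)
  finally show ?thesis .
qed

lemma drift:
  assumes w: "w \<in> St n k" and n: "n \<ge> 2"
  shows "(\<Sum>y\<in>St n k. Qker n w y * real (nz n k y)) \<le> real (nz n k w) * (1 + 1 / (2 * real n))"
proof -
  define g where "g y = real (nz n k y)" for y
  have nn: "real n * (real n - 1) > 0" using n by simp
  have "(\<Sum>p\<in>pairs n. g (mvf w (fst p) (snd p))) \<le> (\<Sum>p\<in>pairs n. g w + (if w ! fst p \<noteq> replicate k False then 1 else 0))"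
  proof (intro sum_mono)
    fix p assume "p \<in> pairs n"
    then show "g (mvf w (fst p) (snd p)) \<le> g w + (if w ! fst p \<noteq> replicate k False then 1 else 0)"
      unfolding g_def using nz_mvf[OF w, of "fst p" "snd p"] by (auto simp: pairs_def)
  qed
  also have "\<dots> = real (n * (n - 1)) * g w + real (n - 1) * g w"
    by (simp add: sum.distrib sum_pairs_ind card_pairs g_def)
  finally have s: "(\<Sum>p\<in>pairs n. g (mvf w (fst p) (snd p))) \<le> real (n * (n - 1)) * g w + real (n - 1) * g w" .
  have P: "(\<Sum>y\<in>St n k. Pker n w y * g y) \<le> g w + g w / real n"
  proof -
    have "(\<Sum>y\<in>St n k. Pker n w y * g y) = (\<Sum>p\<in>pairs n. g (mvf w (fst p) (snd p))) / (real n * (real n - 1))"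
      by (rule Pker_sum[OF w])
    also have "\<dots> \<le> (real (n * (n - 1)) * g w + real (n - 1) * g w) / (real n * (real n - 1))"
      using s nn by (intro divide_right_mono) auto
    also have "\<dots> = g w + g w / real n"
      using n nn by (simp add: of_nat_diff field_simps)
    finally show ?thesis .
  qed
  have "(\<Sum>y\<in>St n k. Qker n w y * g y) = (1/2) * (\<Sum>y\<in>St n k. (if w = y then 1 else 0) * g y) + (1/2) * (\<Sum>y\<in>St n k. Pker n w y * g y)"
    by (simp add: Qker_def sum_distrib_left sum.distrib algebra_simps)
  also have "(\<Sum>y\<in>St n k. (if w = y then 1 else 0) * g y) = g w" using w by (simp add: sum_ind_mult)
  finally have "(\<Sum>y\<in>St n k. Qker n w y * g y) \<le> (1/2) * g w + (1/2) * (g w + g w / real n)"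
    using P by (rule half_mono)
  also have "\<dots> = g w * (1 + 1 / (2 * real n))" using n by (simp add: field_simps)
  finally show ?thesis by (simp add: g_def)
qed

lemma expect_bound:
  assumes x: "x \<in> St n k" and n: "n \<ge> 2"
  shows "(\<Sum>y\<in>St n k. Qpow n k t x y * real (nz n k y)) \<le> real (nz n k x) * (1 + 1 / (2 * real n)) ^ t"
proof (induction t)
  case 0
  have "(\<Sum>y\<in>St n k. (if x = y then 1 else 0) * real (nz n k y)) = real (nz n k x)"
    using x by (simp add: sum_ind_mult)
  then show ?case by simp
next
  case (Suc t)
  define r where "r = 1 + 1 / (2 * real n)"
  have r0: "r \<ge> 0" by (simp add: r_def)
  have "(\<Sum>y\<in>St n k. Qpow n k (Suc t) x y * real (nz n k y))
      = (\<Sum>y\<in>St n k. \<Sum>w\<in>St n k. Qpow n k t x w * (Qker n w y * real (nz n k y)))"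
    by (simp add: sum_distrib_right mult.assoc)
  also have "\<dots> = (\<Sum>w\<in>St n k. \<Sum>y\<in>St n k. Qpow n k t x w * (Qker n w y * real (nz n k y)))"
    by (rule sum.swap)
  also have "\<dots> = (\<Sum>w\<in>St n k. Qpow n k t x w * (\<Sum>y\<in>St n k. Qker n w y * real (nz n k y)))"
    by (simp add: sum_distrib_left)
  also have "\<dots> \<le> (\<Sum>w\<in>St n k. Qpow n k t x w * (real (nz n k w) * r))"
    using drift n Qpow_nonneg[of n] unfolding r_def by (intro sum_mono mult_left_mono) auto
  also have "\<dots> = r * (\<Sum>w\<in>St n k. Qpow n k t x w * real (nz n k w))"
    by (simp add: sum_distrib_left algebra_simps)
  also have "\<dots> \<le> r * (real (nz n k x) * r ^ t)"
    using Suc r0 unfolding r_def by (intro mult_left_mono) auto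
  finally show ?case by (simp add: r_def algebra_simps)
qed

lemma pow_le_exp: "(1 + 1 / (2 * real n)) ^ t \<le> exp (real t / (2 * real n))"
proof -
  have "(1 + 1 / (2 * real n)) ^ t \<le> exp (1 / (2 * real n)) ^ t"
    by (intro power_mono) auto
  also have "\<dots> = exp (real t / (2 * real n))"
    by (simp add: exp_of_nat_mult[symmetric])
  finally show ?thesis .
qed



definition zc :: "nat \<Rightarrow> nat \<Rightarrow> bool list list \<Rightarrow> nat" where
  "zc n k y = card {i. i < n \<and> y ! i = replicate k False}"

lemma nz_zc: "nz n k y + zc n k y = n"
proof -
  have "card {i. i < n \<and> y ! i \<noteq> replicate k False} + card {i. i < n \<and> y ! i = replicate k False}
      = card ({i. i < n \<and> y ! i \<noteq> replicate k False} \<union> {i. i < n \<and> y ! i = replicate k False})"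
    by (rule card_Un_disjoint[symmetric]) auto
  also have "{i. i < n \<and> y ! i \<noteq> replicate k False} \<union> {i. i < n \<and> y ! i = replicate k False} = {..<n}"
    by auto
  finally show ?thesis by (simp add: nz_def zc_def)
qed

lemma zero_row_card:
  assumes i: "i < n" and k: "k \<ge> 1"
  shows "2 * card {y \<in> St n k. y ! i = replicate k False} \<le> card (St n k)"
proof -
  define Z where "Z = {y \<in> St n k. y ! i = replicate k False}"
  define \<phi> where "\<phi> y = y[i := unit k 0]" for y
  have uz: "unit k 0 \<noteq> replicate k False"
  proof
    assume "unit k 0 = replicate k False"
    then have "unit k 0 ! 0 = replicate k False ! 0" by simp
    then show False using k by simp
  qed
  have phiSt: "\<phi> y \<in> St n k" if y: "y \<in> Z" for y
  proof -
    have yS: "y \<in> St n k" and yz: "y ! i = replicate k False" using y by (auto simp: Z_def)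
    note yd = St_D[OF yS]
    have len: "length (\<phi> y) = n" using yd by (simp add: \<phi>_def)
    have rows: "\<forall>z\<in>set (\<phi> y). length z = k"
    proof
      fix z assume "z \<in> set (\<phi> y)"
      then obtain j where j: "j < n" "z = \<phi> y ! j" using len by (auto simp: in_set_conv_nth)
      then show "length z = k" using yd by (cases "j = i") (auto simp: \<phi>_def nth_list_update)
    qed
    have "spans k (\<phi> y)"
      unfolding spans_def
    proof (intro allI impI)
      fix v :: "bool list" assume "length v = k"
      then obtain S where S: "S \<subseteq> {..<n}" "vsum k y S = v" using yd unfolding spans_def by auto
      have fS: "finite (S - {i})" using S finite_subset by blast
      have "vsum k y (S - {i}) = v"
      proof (cases "i \<in> S")
        case True
        have "vsum k y S = vsum k y (insert i (S - {i}))" using True by (simp add: insert_absorb)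
        also have "\<dots> = vadd (vsum k y (S - {i})) (y ! i)" using fS yd i by (intro vsum_insert) auto
        also have "\<dots> = vsum k y (S - {i})" using yz by (simp add: vadd_zero)
        finally show ?thesis using S by simp
      next
        case False
        then show ?thesis using S by simp
      qed
      moreover have "vsum k (\<phi> y) (S - {i}) = vsum k y (S - {i})"
        by (rule vsum_cong) (auto simp: \<phi>_def)
      ultimately show "\<exists>S\<subseteq>{..<length (\<phi> y)}. vsum k (\<phi> y) S = v"
        using S len by (intro exI[of _ "S - {i}"]) auto
    qed
    then show ?thesis using len rows by (simp add: St_def)
  qed
  have inj: "inj_on \<phi> Z"
  proof (rule inj_onI)
    fix y1 y2 assume "y1 \<in> Z" "y2 \<in> Z" "\<phi> y1 = \<phi> y2"
    then have "(\<phi> y1)[i := replicate k False] = (\<phi> y2)[i := replicate k False]"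
      "y1 ! i = replicate k False" "y2 ! i = replicate k False" by (auto simp: Z_def)
    then have h: "y1[i := replicate k False] = y2[i := replicate k False]"
      "y1 ! i = replicate k False" "y2 ! i = replicate k False" by (simp_all add: \<phi>_def)
    have "y1 = y1[i := y1 ! i]" by simp
    also have "\<dots> = y2[i := y2 ! i]" using h by simp
    also have "\<dots> = y2" by simp
    finally show "y1 = y2" .
  qed
  have disj: "\<phi> ` Z \<inter> Z = {}"
  proof -
    have "\<phi> y \<notin> Z" if "y \<in> Z" for y
    proof -
      have "length y = n" using that St_D by (auto simp: Z_def)
      then have "\<phi> y ! i = unit k 0" using i by (simp add: \<phi>_def)
      then show ?thesis using uz by (auto simp: Z_def)
    qed
    then show ?thesis by blast
  qed
  have "2 * card Z = card (\<phi> ` Z) + card Z" using card_image[OF inj] by simp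
  also have "\<dots> = card (\<phi> ` Z \<union> Z)"
    using disj by (intro card_Un_disjoint[symmetric]) (auto simp: Z_def)
  also have "\<dots> \<le> card (St n k)"
    using phiSt by (intro card_mono) (auto simp: Z_def)
  finally show ?thesis by (simp add: Z_def)
qed

lemma sum_zc:
  assumes k: "k \<ge> 1"
  shows "2 * (\<Sum>y\<in>St n k. real (zc n k y)) \<le> real n * real (card (St n k))"
proof -
  have "(\<Sum>y\<in>St n k. real (zc n k y)) = (\<Sum>y\<in>St n k. \<Sum>i<n. (if y ! i = replicate k False then 1 else 0 :: real))"
    unfolding zc_def by (intro sum.cong refl) (simp add: sum.If_cases Int_def conj_commute lessThan_def)
  also have "\<dots> = (\<Sum>i<n. \<Sum>y\<in>St n k. (if y ! i = replicate k False then 1 else 0 :: real))"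
    by (rule sum.swap)
  also have "\<dots> = (\<Sum>i<n. real (card {y \<in> St n k. y ! i = replicate k False}))"
    by (intro sum.cong refl) (simp add: sum.If_cases Int_def)
  finally have e: "(\<Sum>y\<in>St n k. real (zc n k y)) = (\<Sum>i<n. real (card {y \<in> St n k. y ! i = replicate k False}))" .
  have "2 * (\<Sum>i<n. real (card {y \<in> St n k. y ! i = replicate k False})) = (\<Sum>i<n. real (2 * card {y \<in> St n k. y ! i = replicate k False}))"
    by (simp add: sum_distrib_left)
  also have "\<dots> \<le> (\<Sum>i<n. real (card (St n k)))"
    using zero_row_card[OF _ k] by (intro sum_mono) (simp only: of_nat_le_iff, auto)
  also have "\<dots> = real n * real (card (St n k))" by simp
  finally show ?thesis using e by simp
qed

definition Bset :: "nat \<Rightarrow> nat \<Rightarrow> bool list list set" where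
  "Bset n k = {y \<in> St n k. n < 8 * nz n k y}"

lemma pi_B:
  assumes k: "k \<ge> 1" and n: "n \<ge> 1"
  shows "7 * card (St n k - Bset n k) \<le> 4 * card (St n k)"
proof -
  have "(\<Sum>y\<in>St n k - Bset n k. 7 * real n / 8) \<le> (\<Sum>y\<in>St n k - Bset n k. real (zc n k y))"
  proof (intro sum_mono)
    fix y assume "y \<in> St n k - Bset n k"
    then have "8 * nz n k y \<le> n" by (auto simp: Bset_def)
    then show "7 * real n / 8 \<le> real (zc n k y)" using nz_zc[of n k y] by linarith
  qed
  also have "\<dots> \<le> (\<Sum>y\<in>St n k. real (zc n k y))" by (intro sum_mono2) auto
  finally have c1: "real (card (St n k - Bset n k)) * (7 * real n / 8) \<le> (\<Sum>y\<in>St n k. real (zc n k y))"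
    by simp
  have "real n * (7 * real (card (St n k - Bset n k))) = 8 * (real (card (St n k - Bset n k)) * (7 * real n / 8))"
    by (simp add: algebra_simps)
  also have "\<dots> \<le> 8 * (\<Sum>y\<in>St n k. real (zc n k y))" by (rule mult_left_mono[OF c1]) simp
  also have "\<dots> \<le> real n * (4 * real (card (St n k)))"
    using sum_zc[OF k, where n=n] by simp
  finally have "real n * (7 * real (card (St n k - Bset n k))) \<le> real n * (4 * real (card (St n k)))" .
  then have "7 * real (card (St n k - Bset n k)) \<le> 4 * real (card (St n k))"
    using n by (simp add: mult_le_cancel_left)
  then show ?thesis by linarith
qed

lemma markov_B:
  assumes x: "x \<in> St n k" and n: "n \<ge> 2"
  shows "(\<Sum>y\<in>Bset n k. Qpow n k t x y) \<le> 8 / real n * (\<Sum>y\<in>St n k. Qpow n k t x y * real (nz n k y))"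
proof -
  have "(\<Sum>y\<in>Bset n k. Qpow n k t x y) \<le> (\<Sum>y\<in>Bset n k. Qpow n k t x y * (8 * real (nz n k y) / real n))"
  proof (intro sum_mono)
    fix y assume "y \<in> Bset n k"
    then have "1 \<le> 8 * real (nz n k y) / real n" using n by (auto simp: Bset_def field_simps)
    then show "Qpow n k t x y \<le> Qpow n k t x y * (8 * real (nz n k y) / real n)"
      using Qpow_nonneg[of n k t x y] n mult_left_mono[of 1 "8 * real (nz n k y) / real n" "Qpow n k t x y"] by simp
  qed
  also have "\<dots> \<le> (\<Sum>y\<in>St n k. Qpow n k t x y * (8 * real (nz n k y) / real n))"
    using Qpow_nonneg[of n] n by (intro sum_mono2) (auto simp: Bset_def)
  also have "\<dots> = 8 / real n * (\<Sum>y\<in>St n k. Qpow n k t x y * real (nz n k y))"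
    by (simp add: sum_distrib_left algebra_simps)
  finally show ?thesis .
qed

lemma tv_helper: "(T::real) = 1/2 * (a + b) \<Longrightarrow> r - pb \<le> a \<Longrightarrow> pc - r' \<le> b \<Longrightarrow> pb + pc = 1 \<Longrightarrow> r + r' = 1 \<Longrightarrow> r - pb \<le> T"
  by simp

lemma tv_ge_B:
  assumes x: "x \<in> St n k" and n: "n \<ge> 2"
  shows "tv_dist n k t x \<ge> real (card (Bset n k)) / real (card (St n k)) - (\<Sum>y\<in>Bset n k. Qpow n k t x y)"
proof -
  define N where "N = real (card (St n k))"
  define p where "p y = Qpow n k t x y" for y
  define C where "C = St n k - Bset n k"
  have Npos: "N > 0" using x by (auto simp: N_def card_gt_0_iff)
  have BS: "Bset n k \<subseteq> St n k" by (auto simp: Bset_def)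
  have fB: "finite (Bset n k)" using finite_subset[OF BS finite_St] .
  have split: "(\<Sum>y\<in>St n k. h y) = (\<Sum>y\<in>Bset n k. h y) + (\<Sum>y\<in>C. h y)" for h :: "_ \<Rightarrow> real"
    using sum.subset_diff[OF BS finite_St, of h] by (simp add: C_def)
  have sp: "(\<Sum>y\<in>Bset n k. p y) + (\<Sum>y\<in>C. p y) = 1"
    using Qpow_rowsum[OF x n] split[of p] by (simp add: p_def)
  have cc: "real (card (Bset n k)) + real (card C) = N"
    using split[of "\<lambda>_. 1"] by (simp add: N_def)
  define r where "r = real (card (Bset n k)) / N"
  define r' where "r' = real (card C) / N"
  have rr: "r + r' = 1" using cc Npos by (simp add: r_def r'_def field_simps)
  have a: "(\<Sum>y\<in>Bset n k. \<bar>p y - 1/N\<bar>) \<ge> r - (\<Sum>y\<in>Bset n k. p y)"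
  proof -
    have "(\<Sum>y\<in>Bset n k. 1/N - p y) \<le> (\<Sum>y\<in>Bset n k. \<bar>p y - 1/N\<bar>)" by (intro sum_mono) auto
    moreover have "(\<Sum>y\<in>Bset n k. 1/N - p y) = r - (\<Sum>y\<in>Bset n k. p y)"
      by (simp add: sum_subtractf r_def)
    ultimately show ?thesis by simp
  qed
  have b: "(\<Sum>y\<in>C. \<bar>p y - 1/N\<bar>) \<ge> (\<Sum>y\<in>C. p y) - r'"
  proof -
    have "(\<Sum>y\<in>C. p y - 1/N) \<le> (\<Sum>y\<in>C. \<bar>p y - 1/N\<bar>)" by (intro sum_mono) auto
    moreover have "(\<Sum>y\<in>C. p y - 1/N) = (\<Sum>y\<in>C. p y) - r'"
      by (simp add: sum_subtractf r'_def)
    ultimately show ?thesis by simp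
  qed
  have tv: "tv_dist n k t x = (1/2) * ((\<Sum>y\<in>Bset n k. \<bar>p y - 1/N\<bar>) + (\<Sum>y\<in>C. \<bar>p y - 1/N\<bar>))"
    unfolding tv_dist_def N_def p_def by (rule arg_cong[where f="\<lambda>u. 1/2 * u"], rule split)
  have "tv_dist n k t x \<ge> r - (\<Sum>y\<in>Bset n k. p y)"
    by (rule tv_helper[OF tv a b sp rr])
  then show ?thesis by (simp add: N_def p_def r_def)
qed



lemma asym: "eventually (\<lambda>n::nat. 224 * (ln (real n) * ln (exp 1 * real n)) \<le> 5 * sqrt (real n)) sequentially"
  by real_asymp

lemma ln2_ge: "ln (2::real) \<ge> 1/2"
proof -
  have "exp (1/2::real) ^ 2 = exp 1" by (simp add: exp_double[symmetric] power2_eq_square exp_add[symmetric])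
  also have "\<dots> < 2 ^ 2" using exp_le by simp
  finally have "exp (1/2::real) < 2" by (rule power_less_imp_less_base) simp
  then show ?thesis by (metis exp_less_cancel_iff exp_ln less_le_not_le zero_less_numeral nle_le)
qed

lemma nat_M_bound: fixes k :: nat shows "k * k \<le> 4 * ((k - k div 2) * (k div 2)) + 1"
proof -
  obtain q where "k = 2 * q \<or> k = 2 * q + 1" by (metis oddE evenE)
  then show ?thesis
  proof
    assume k: "k = 2 * q"
    then have "k div 2 = q" "k - k div 2 = q" by auto
    then show ?thesis using k by (simp add: algebra_simps)
  next
    assume k: "k = 2 * q + 1"
    then have "k div 2 = q" "k - k div 2 = q + 1" by auto
    then show ?thesis using k by (simp add: algebra_simps)
  qed
qed

lemma tau_good:
  assumes n: "n \<ge> 2" and kn: "k \<le> n"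
  shows "\<forall>x\<in>St n k. tv_dist n k (tau_mix n k) x \<le> 1/4"
  unfolding tau_mix_def by (rule LeastI_ex) (rule mixing_exists[OF n kn])

lemma bound_count:
  assumes n: "n \<ge> 8" and k: "1 \<le> k" "k \<le> n" and P: "\<forall>x\<in>St n k. tv_dist n k t x \<le> 1/4"
  shows "real t \<ge> ln 2 / 32 * (real n * real k / ln (exp 1 * real n))"
proof -
  define x where "x = canon n k"
  have x: "x \<in> St n k" using canon_St[OF k(2)] by (simp add: x_def)
  define N where "N = real (card (St n k))"
  define R where "R = real (card (Rset n x t))"
  have Npos: "N > 0" using x by (auto simp: N_def card_gt_0_iff)
  have "(1 - R / N) / 2 \<le> 1/4"
    using tv_lower_reach[of n x k t] P x n by (force simp: R_def N_def)
  then have NR: "N \<le> 2 * R" using Npos by (simp add: field_simps)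
  define M where "M = (k - k div 2) * (k div 2) + k * (n - k)"
  have NM0: "(2::nat) ^ M \<le> card (St n k)" using card_St_lower[OF k(2)] by (simp add: M_def)
  have NM: "2 ^ M \<le> N" unfolding N_def using of_nat_mono[OF NM0, where 'a=real] by simp
  have Rt0: "card (Rset n x t) \<le> (n^2 + 1) ^ t" by (rule Rset_card)
  have Rt: "R \<le> (real n ^ 2 + 1) ^ t"
    unfolding R_def using of_nat_mono[OF Rt0, where 'a=real] by (simp add: add.commute)
  have "(2::real) ^ M \<le> 2 * (real n ^ 2 + 1) ^ t" using NM NR Rt by linarith
  then have "ln ((2::real) ^ M) \<le> ln (2 * (real n ^ 2 + 1) ^ t)"
    by (rule ln_mono) simp_all
  moreover have "ln ((2::real) ^ M) = real M * ln 2" by (simp add: ln_realpow)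
  moreover have "ln (2 * (real n ^ 2 + 1) ^ t) = ln 2 + real t * ln (real n ^ 2 + 1)"
  proof -
    have p: "real n ^ 2 + 1 > 0" using zero_le_power2[of "real n"] by linarith
    then have "ln (2 * (real n ^ 2 + 1) ^ t) = ln 2 + ln ((real n ^ 2 + 1) ^ t)"
      by (intro ln_mult_pos) auto
    also have "ln ((real n ^ 2 + 1) ^ t) = real t * ln (real n ^ 2 + 1)" by (rule ln_realpow)
    finally show ?thesis .
  qed
  ultimately have l1: "real M * ln 2 \<le> ln 2 + real t * ln (real n ^ 2 + 1)" by simp
  have en: "exp 1 * real n > 0" using n by simp
  have "real n ^ 2 + 1 \<le> (exp 1 * real n) ^ 2"
  proof -
    have "exp 1 \<ge> (2::real)" using exp_ge_add_one_self[of 1] by simp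
    then have "(exp 1) ^ 2 \<ge> (2::real) ^ 2" by (rule power_mono) simp
    then have "(2::real) ^ 2 * real n ^ 2 \<le> (exp 1) ^ 2 * real n ^ 2"
      by (rule mult_right_mono) simp
    then have "(exp 1 * real n) ^ 2 \<ge> 4 * real n ^ 2" by (simp add: power_mult_distrib)
    moreover have "real n ^ 2 \<ge> 1" using n by simp
    ultimately show ?thesis by linarith
  qed
  then have "ln (real n ^ 2 + 1) \<le> ln ((exp 1 * real n) ^ 2)"
    by (rule ln_mono) (use zero_le_power2[of "real n"] in linarith)
  also have "\<dots> = 2 * ln (exp 1 * real n)" by (simp only: ln_realpow)
  finally have l2: "ln (real n ^ 2 + 1) \<le> 2 * ln (exp 1 * real n)" .
  have Mb0: "n * k \<le> 4 * M + 1"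
  proof -
    define P where "P = (k - k div 2) * (k div 2)"
    define Q where "Q = k * (n - k)"
    have a: "k * k \<le> 4 * P + 1" unfolding P_def by (rule nat_M_bound)
    have c0: "k * (n - k) + k * k = k * n" using k by (simp add: diff_mult_distrib2)
    have c: "Q + k * k = n * k" using c0 by (simp add: Q_def mult.commute)
    have m: "M = P + Q" by (simp add: M_def P_def Q_def)
    show ?thesis using a c m by linarith
  qed
  have Mb: "real n * real k \<le> 4 * real M + 1"
    using of_nat_mono[OF Mb0, where 'a=real] by simp
  have Mb2: "real n * real k / 16 \<le> real M - 1"
  proof -
    have "real n * real k \<ge> 8 * real k" using n k by (intro mult_right_mono) auto
    then have "real n * real k \<ge> 8" using k by linarith
    then show ?thesis using Mb by linarith
  qed
  have ln2: "ln (2::real) > 0" by simp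
  have "real n * real k / 16 * ln 2 \<le> (real M - 1) * ln 2"
    using Mb2 ln2 by (intro mult_right_mono) auto
  also have "\<dots> \<le> real t * ln (real n ^ 2 + 1)" using l1 by (simp add: algebra_simps)
  also have "\<dots> \<le> real t * (2 * ln (exp 1 * real n))" using l2 by (intro mult_left_mono) auto
  finally have fin: "real n * real k / 16 * ln 2 \<le> real t * (2 * ln (exp 1 * real n))" .
  have lpos: "ln (exp 1 * real n) > 0"
  proof -
    have "ln (exp 1 * real n) = 1 + ln (real n)" using n by (simp add: ln_mult)
    moreover have "ln (real n) > 0" using n by simp
    ultimately show ?thesis by linarith
  qed
  show ?thesis using fin lpos by (simp add: field_simps)
qed

lemma nz_canon: "k \<le> n \<Longrightarrow> nz n k (canon n k) = k"
proof -
  assume kn: "k \<le> n"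
  have "{i. i < n \<and> canon n k ! i \<noteq> replicate k False} = {..<k}"
  proof (rule set_eqI, rule iffI)
    fix i assume "i \<in> {i. i < n \<and> canon n k ! i \<noteq> replicate k False}"
    then show "i \<in> {..<k}" by (cases "i < k") (auto simp: canon_def)
  next
    fix i assume i: "i \<in> {..<k}"
    have "canon n k ! i ! i = True" using i kn by (simp add: canon_def)
    moreover have "i < n" using i kn by simp
    moreover have "replicate k False ! i = False" using i by simp
    ultimately show "i \<in> {i. i < n \<and> canon n k ! i \<noteq> replicate k False}" by auto
  qed
  then show ?thesis by (simp add: nz_def)
qed

lemma bound_coupon:
  assumes n: "n \<ge> 2" and k: "1 \<le> k" "k \<le> n" and small: "224 * real k \<le> 5 * sqrt (real n)"
    and P: "\<forall>x\<in>St n k. tv_dist n k t x \<le> 1/4"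
  shows "real t \<ge> real n * ln (real n)"
proof (rule ccontr)
  assume "\<not> real t \<ge> real n * ln (real n)"
  then have tlt: "real t < real n * ln (real n)" by simp
  define x where "x = canon n k"
  have x: "x \<in> St n k" using canon_St[OF k(2)] by (simp add: x_def)
  define N where "N = real (card (St n k))"
  have Npos: "N > 0" using x by (auto simp: N_def card_gt_0_iff)
  have BS: "Bset n k \<subseteq> St n k" by (auto simp: Bset_def)
  have "7 * card (St n k - Bset n k) \<le> 4 * card (St n k)" using pi_B[OF k(1)] n by simp
  moreover have "card (St n k - Bset n k) = card (St n k) - card (Bset n k)"
    using BS by (simp add: card_Diff_subset finite_subset[OF BS])
  moreover have "card (Bset n k) \<le> card (St n k)" using BS by (simp add: card_mono)
  ultimately have "3 * card (St n k) \<le> 7 * card (Bset n k)" by linarith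
  then have "3 * N \<le> 7 * real (card (Bset n k))" unfolding N_def
    by (metis of_nat_le_iff of_nat_mult of_nat_numeral)
  then have piB: "real (card (Bset n k)) / N \<ge> 3/7" using Npos by (simp add: field_simps)
  have npos: "real n > 0" using n by simp
  have e1: "exp (real t / (2 * real n)) < sqrt (real n)"
  proof -
    have "real t / (2 * real n) < ln (real n) / 2" using tlt npos by (simp add: field_simps)
    then have "exp (real t / (2 * real n)) < exp (ln (real n) / 2)" by simp
    also have "exp (ln (real n) / 2) = sqrt (real n)"
      using npos by (simp add: powr_half_sqrt[symmetric] powr_def)
    finally show ?thesis .
  qed
  have E: "(\<Sum>y\<in>St n k. Qpow n k t x y * real (nz n k y)) \<le> real k * exp (real t / (2 * real n))"
  proof -
    have "(\<Sum>y\<in>St n k. Qpow n k t x y * real (nz n k y)) \<le> real (nz n k x) * (1 + 1 / (2 * real n)) ^ t"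
      by (rule expect_bound[OF x n])
    also have "\<dots> \<le> real k * exp (real t / (2 * real n))"
      using nz_canon[OF k(2)] pow_le_exp[of n t] by (simp add: x_def mult_left_mono)
    finally show ?thesis .
  qed
  have pB: "(\<Sum>y\<in>Bset n k. Qpow n k t x y) < 5/28"
  proof -
    have "(\<Sum>y\<in>Bset n k. Qpow n k t x y) \<le> 8 / real n * (real k * exp (real t / (2 * real n)))"
    proof -
      have "8 / real n * (\<Sum>y\<in>St n k. Qpow n k t x y * real (nz n k y)) \<le> 8 / real n * (real k * exp (real t / (2 * real n)))"
        using E npos by (intro mult_left_mono) auto
      then show ?thesis using markov_B[OF x n, of t] by linarith
    qed
    also have "\<dots> < 8 / real n * (real k * sqrt (real n))"
      using e1 k npos by (intro mult_strict_left_mono) auto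
    also have "\<dots> \<le> 8 / real n * (5 * sqrt (real n) / 224 * sqrt (real n))"
      using small npos by (intro mult_left_mono mult_right_mono) auto
    also have "\<dots> = 5/28" using npos by (simp add: field_simps)
    finally show ?thesis .
  qed
  have "tv_dist n k t x \<ge> real (card (Bset n k)) / N - (\<Sum>y\<in>Bset n k. Qpow n k t x y)"
    using tv_ge_B[OF x n, of t] by (simp add: N_def)
  then have "tv_dist n k t x > 1/4" using piB pB by linarith
  then show False using P x by force
qed

theorem main:
  shows "\<exists>c::real. c > 0 \<and> (\<exists>N::nat. \<forall>n k. N \<le> n \<longrightarrow> 1 \<le> k \<longrightarrow> k \<le> n \<longrightarrow>
           real (tau_mix n k) \<ge>
             c * max (real n * ln (real n)) (real n * real k / ln (exp 1 * real n)))"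
proof -
  obtain N0 where N0: "\<And>n. n \<ge> N0 \<Longrightarrow> 224 * (ln (real n) * ln (exp 1 * real n)) \<le> 5 * sqrt (real n)"
    using asym unfolding eventually_sequentially by blast
  have "\<forall>n k. max N0 8 \<le> n \<longrightarrow> 1 \<le> k \<longrightarrow> k \<le> n \<longrightarrow>
           real (tau_mix n k) \<ge> 1/64 * max (real n * ln (real n)) (real n * real k / ln (exp 1 * real n))"
  proof (intro allI impI)
    fix n k :: nat assume n: "max N0 8 \<le> n" and k: "1 \<le> k" "k \<le> n"
    have n8: "n \<ge> 8" and nN0: "n \<ge> N0" using n by auto
    have n2: "n \<ge> 2" using n8 by simp
    define A where "A = real n * ln (real n)"
    define B where "B = real n * real k / ln (exp 1 * real n)"
    define T where "T = real (tau_mix n k)"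
    have P: "\<forall>x\<in>St n k. tv_dist n k (tau_mix n k) x \<le> 1/4" by (rule tau_good[OF n2 k(2)])
    have npos: "real n > 0" using n8 by simp
    have lnn: "ln (real n) > 0" using n8 by simp
    have "ln (exp 1 * real n) = 1 + ln (real n)" using npos by (simp add: ln_mult)
    then have lpos: "ln (exp 1 * real n) > 0" using lnn by linarith
    have A0: "A \<ge> 0" using npos lnn by (simp add: A_def)
    have B0: "B \<ge> 0" using npos lpos by (simp add: B_def)
    have TB: "T \<ge> ln 2 / 32 * B" unfolding T_def B_def by (rule bound_count[OF n8 k P])
    have "ln 2 / 32 * B \<ge> 1/64 * B" using ln2_ge B0 by (intro mult_right_mono) auto
    with TB have TB': "T \<ge> 1/64 * B" by linarith
    show "real (tau_mix n k) \<ge> 1/64 * max (real n * ln (real n)) (real n * real k / ln (exp 1 * real n))"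
    proof (cases "224 * real k \<le> 5 * sqrt (real n)")
      case True
      have "T \<ge> A" unfolding T_def A_def by (rule bound_coupon[OF n2 k True P])
      then have "T \<ge> 1/64 * A" using A0 by linarith
      then show ?thesis using TB' by (simp add: T_def[symmetric] A_def[symmetric] B_def[symmetric] max_def)
    next
      case False
      have "ln (real n) * ln (exp 1 * real n) \<le> real k"
        using N0[OF nN0] False by linarith
      then have "ln (real n) \<le> real k / ln (exp 1 * real n)"
        using lpos by (simp add: field_simps)
      then have "real n * ln (real n) \<le> real n * (real k / ln (exp 1 * real n))"
        using npos by (intro mult_left_mono) auto
      then have "A \<le> B" unfolding A_def B_def by simp
      then have "1/64 * max A B = 1/64 * B" by simp
      then show ?thesis using TB' by (simp add: T_def[symmetric] A_def[symmetric] B_def[symmetric])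
    qed
  qed
  then show ?thesis by (intro exI[of _ "1/64"]) (auto intro!: exI[of _ "max N0 8"])
qed


theorem theorem1p2:
  shows "\<exists>c::real. c > 0 \<and> (\<exists>N::nat. \<forall>n k. N \<le> n \<longrightarrow> 1 \<le> k \<longrightarrow> k \<le> n \<longrightarrow>
           real (tau_mix n k) \<ge>
             c * max (real n * ln (real n)) (real n * real k / ln (exp 1 * real n)))"
    using main .

end
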